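(* Let $(\mathfrak g,\triangleright)$ be a post-Lie algebra and $\phi:\mathcal U(\overline{\mathfrak g})\to\mathcal U_\ast(\mathfrak g)$ the Hopf algebra isomorphism extending the identity of $V$. For all $n\ge1$ and $x_1,\dots,x_n\in\mathfrak g$, $$\phi(x_1.\,x_2.\,\cdots.\,x_n)=x_1\phi(x_2.\,\cdots.\,x_n)+x_1\triangleright\phi(x_2.\,\cdots.\,x_n)$$ (with $\phi(\mathbf 1)=\mathbf 1$), and consequently $$\phi(x_1.\,\cdots.\,x_n)=x_1\ast\cdots\ast x_n=\sum_{\pi\in P_n}X_\pi .$$ Here $P_n$ is the set of all set partitions of $\{1,\dots,n\}$; for $\pi=\{\pi_1,\dots,\pi_m\}$ the blocks are ordered so that $\max\pi_1<\max\pi_2<\dots<\max\pi_m$; for a block $\pi_i=\{k_1<k_2<\dots<k_l\}$ one sets $x(\pi_i):=x_{k_1}\triangleright(x_{k_2}\triangleright(\cdots\triangleright(x_{k_{l-1}}\triangleright x_{k_l})\cdots))\in\mathfrak g$; and $X_\pi:=x(\pi_1)x(\pi_2)\cdots x(\pi_m)$, the product taken in $\mathcal U(\mathfrak g)$.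
   Context: All vector spaces are finite dimensional over $\mathbb K=\mathbb R$ or $\mathbb C$. A (left) post-Lie algebra is a Lie algebra $\mathfrak g=(V,[\cdot,\cdot])$ with a bilinear product $\triangleright:V\otimes V\to V$ such that for all $x,y,z$: $x\triangleright[y,z]=[x\triangleright y,z]+[y,x\triangleright z]$ and $[x,y]\triangleright z=a_\triangleright(x,y,z)-a_\triangleright(y,x,z)$, where $a_\triangleright(x,y,z)=x\triangleright(y\triangleright z)-(x\triangleright y)\triangleright z$. The bracket $[[x,y]]:=x\triangleright y-y\triangleright x+[x,y]$ is a Lie bracket; $\overline{\mathfrak g}:=(V,[[\cdot,\cdot]])$, and the product of $\mathcal U(\overline{\mathfrak g})$ is written $A.\,B$. $\mathcal U(\mathfrak g)$ denotes the universal enveloping algebra with its usual cocommutative Hopf structure (product written as concatenation, unit $\mathbf 1$, elements of $\mathfrak g$ primitive, counit $\epsilon$); Sweedler notation $\Delta A=A_{(1)}\otimes A_{(2)}$. The post-Lie product extends uniquely to a bilinear product $\triangleright$ on $\mathcal U(\mathfrak g)$ such that, for $A,B,C\in\mathcal U(\mathfrak g)$, $x\in\mathfrak g$: $\mathbf 1\triangleright A=A$, $A\triangleright\mathbf 1=\epsilon(A)\mathbf 1$, $xA\triangleright B=x\triangleright(A\triangleright B)-(x\triangleright A)\triangleright B$, $A\triangleright BC=(A_{(1)}\triangleright B)(A_{(2)}\triangleright C)$. Define $A\ast B:=A_{(1)}(A_{(2)}\triangleright B)$; $\mathcal U_\ast(\mathfrak g):=(\mathcal U(\mathfrak g),\ast,\mathbf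 1,\Delta,\epsilon)$ is a Hopf algebra. It is known that the identity map $\overline{\mathfrak g}\to\mathfrak g$ extends uniquely to a Hopf algebra isomorphism $\phi:\mathcal U(\overline{\mathfrak g})\to\mathcal U_\ast(\mathfrak g)$ (in particular an algebra morphism, so $\phi(x_1.\,\cdots.\,x_n)=x_1\ast\cdots\ast x_n$). *)

theory Defs
  imports Complex_Main "HOL-Library.Disjoint_Sets"
begin

text \<open>The ground field: the scalars 'k range over a real normed field; by the
Gelfand--Mazur/Mazur theorem such a field is (isomorphic to) R or C.
V is a type 'v with scalar multiplication sc.\<close>

definition lie_algebra :: "('k::field \<Rightarrow> 'v::ab_group_add \<Rightarrow> 'v) \<Rightarrow> ('v \<Rightarrow> 'v \<Rightarrow> 'v) \<Rightarrow> bool" where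
  "lie_algebra sc br \<longleftrightarrow>
     vector_space sc \<and> (\<exists>B. finite B \<and> module.span sc B = UNIV) \<and>
     (\<forall>x y z. br (x + y) z = br x z + br y z) \<and>
     (\<forall>x y z. br x (y + z) = br x y + br x z) \<and>
     (\<forall>c x y. br (sc c x) y = sc c (br x y)) \<and>
     (\<forall>c x y. br x (sc c y) = sc c (br x y)) \<and>
     (\<forall>x. br x x = 0) \<and>
     (\<forall>x y z. br x (br y z) + br y (br z x) + br z (br x y) = 0)"

definition post_lie_algebra :: "('k::field \<Rightarrow> 'v::ab_group_add \<Rightarrow> 'v) \<Rightarrow> ('v \<Rightarrow> 'v \<Rightarrow> 'v) \<Rightarrow> ('v \<Rightarrow> 'v \<Rightarrow> 'v) \<Rightarrow> bool" where
  "post_lie_algebra sc br tri \<longleftrightarrow>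
     lie_algebra sc br \<and>
     (\<forall>x y z. tri (x + y) z = tri x z + tri y z) \<and>
     (\<forall>x y z. tri x (y + z) = tri x y + tri x z) \<and>
     (\<forall>c x y. tri (sc c x) y = sc c (tri x y)) \<and>
     (\<forall>c x y. tri x (sc c y) = sc c (tri x y)) \<and>
     (\<forall>x y z. tri x (br y z) = br (tri x y) z + br y (tri x z)) \<and>
     (\<forall>x y z. tri (br x y) z =
        (tri x (tri y z) - tri (tri x y) z) - (tri y (tri x z) - tri (tri y x) z))"

definition bar_bracket :: "('v::ab_group_add \<Rightarrow> 'v \<Rightarrow> 'v) \<Rightarrow> ('v \<Rightarrow> 'v \<Rightarrow> 'v) \<Rightarrow> 'v \<Rightarrow> 'v \<Rightarrow> 'v" where
  "bar_bracket br tri x y = tri x y - tri y x + br x y"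

text \<open>The free associative unital algebra K<V> on the set V: finitely supported
functions from words over V to K.  The word u stands for the monomial u1 u2 ... un.
U(g) is K<V> modulo the two-sided ideal generated by the linearity relations
[x+y]-[x]-[y], [c x]-c[x] and the Lie relations [x][y]-[y][x]-[[x,y]]
(equivalently: tensor algebra T(V) modulo the usual ideal).  Elements of U(g) are
represented by elements of K<V>; equality in U(g) is the relation ueq.\<close>

type_synonym ('v, 'k) fa = "'v list \<Rightarrow> 'k"

definition fa_fin :: "('v, 'k::zero) fa \<Rightarrow> bool" where
  "fa_fin p \<longleftrightarrow> finite {w. p w \<noteq> 0}"

definition fa_word :: "'v list \<Rightarrow> ('v, 'k::{zero,one}) fa" where
  "fa_word u = (\<lambda>w. if w = u then 1 else 0)"

definition fa_one :: "('v, 'k::{zero,one}) fa" where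
  "fa_one = fa_word []"

definition fa_add :: "('v, 'k::plus) fa \<Rightarrow> ('v, 'k) fa \<Rightarrow> ('v, 'k) fa" where
  "fa_add p q = (\<lambda>w. p w + q w)"

definition fa_diff :: "('v, 'k::minus) fa \<Rightarrow> ('v, 'k) fa \<Rightarrow> ('v, 'k) fa" where
  "fa_diff p q = (\<lambda>w. p w - q w)"

definition fa_scale :: "'k::times \<Rightarrow> ('v, 'k) fa \<Rightarrow> ('v, 'k) fa" where
  "fa_scale c p = (\<lambda>w. c * p w)"

definition fa_mult :: "('v, 'k::comm_semiring_1) fa \<Rightarrow> ('v, 'k) fa \<Rightarrow> ('v, 'k) fa" where
  "fa_mult p q = (\<lambda>w. \<Sum>i\<le>length w. p (take i w) * q (drop i w))"

inductive_set fa_span :: "('v, 'k::comm_ring_1) fa set \<Rightarrow> ('v, 'k) fa set"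
  for S :: "('v, 'k) fa set" where
  zero: "(\<lambda>w. 0) \<in> fa_span S"
| step: "p \<in> S \<Longrightarrow> q \<in> fa_span S \<Longrightarrow> (\<lambda>w. c * p w + q w) \<in> fa_span S"

definition ue_relators :: "('k::comm_ring_1 \<Rightarrow> 'v::ab_group_add \<Rightarrow> 'v) \<Rightarrow> ('v \<Rightarrow> 'v \<Rightarrow> 'v) \<Rightarrow> ('v, 'k) fa set" where
  "ue_relators sc br =
     {fa_diff (fa_diff (fa_word [x + y]) (fa_word [x])) (fa_word [y]) | x y. True} \<union>
     {fa_diff (fa_word [sc c x]) (fa_scale c (fa_word [x])) | c x. True} \<union>
     {fa_diff (fa_diff (fa_word [x, y]) (fa_word [y, x])) (fa_word [br x y]) | x y. True}"

definition ue_ideal :: "('k::comm_ring_1 \<Rightarrow> 'v::ab_group_add \<Rightarrow> 'v) \<Rightarrow> ('v \<Rightarrow> 'v \<Rightarrow> 'v) \<Rightarrow> ('v, 'k) fa set" where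
  "ue_ideal sc br =
     fa_span {fa_mult (fa_mult (fa_word u) r) (fa_word v) | u r v. r \<in> ue_relators sc br}"

definition ueq :: "('k::comm_ring_1 \<Rightarrow> 'v::ab_group_add \<Rightarrow> 'v) \<Rightarrow> ('v \<Rightarrow> 'v \<Rightarrow> 'v)
    \<Rightarrow> ('v, 'k) fa \<Rightarrow> ('v, 'k) fa \<Rightarrow> bool" where
  "ueq sc br p q \<longleftrightarrow> fa_diff p q \<in> ue_ideal sc br"

definition fa_eps :: "('v, 'k) fa \<Rightarrow> 'k" where
  "fa_eps p = p []"

text \<open>The coproduct of a monomial u1...un is the sum over S of u_S (x) u_(complement S)
(all ui primitive), where u_S = nths u S is the ordered subword on the positions S.\<close>

text \<open>T represents the extension of the post-Lie product to U(g) (a map on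
representatives, well defined on classes).  The axioms are those of the context,
with Sweedler notation unfolded on monomials (the first argument extends linearly).\<close>
definition ext_post_lie :: "('k::comm_ring_1 \<Rightarrow> 'v::ab_group_add \<Rightarrow> 'v) \<Rightarrow> ('v \<Rightarrow> 'v \<Rightarrow> 'v) \<Rightarrow> ('v \<Rightarrow> 'v \<Rightarrow> 'v)
    \<Rightarrow> (('v, 'k) fa \<Rightarrow> ('v, 'k) fa \<Rightarrow> ('v, 'k) fa) \<Rightarrow> bool" where
  "ext_post_lie sc br tri T \<longleftrightarrow>
     (\<forall>p q. fa_fin p \<longrightarrow> fa_fin q \<longrightarrow> fa_fin (T p q)) \<and>
     (\<forall>p p' q q'. fa_fin p \<longrightarrow> fa_fin p' \<longrightarrow> fa_fin q \<longrightarrow> fa_fin q' \<longrightarrow>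
        ueq sc br p p' \<longrightarrow> ueq sc br q q' \<longrightarrow> ueq sc br (T p q) (T p' q')) \<and>
     (\<forall>c p p' q. fa_fin p \<longrightarrow> fa_fin p' \<longrightarrow> fa_fin q \<longrightarrow>
        ueq sc br (T (fa_add (fa_scale c p) p') q) (fa_add (fa_scale c (T p q)) (T p' q))) \<and>
     (\<forall>c p q q'. fa_fin p \<longrightarrow> fa_fin q \<longrightarrow> fa_fin q' \<longrightarrow>
        ueq sc br (T p (fa_add (fa_scale c q) q')) (fa_add (fa_scale c (T p q)) (T p q'))) \<and>
     (\<forall>x y. ueq sc br (T (fa_word [x]) (fa_word [y])) (fa_word [tri x y])) \<and>
     (\<forall>p. fa_fin p \<longrightarrow> ueq sc br (T fa_one p) p) \<and>
     (\<forall>p. fa_fin p \<longrightarrow> ueq sc br (T p fa_one) (fa_scale (fa_eps p) fa_one)) \<and>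
     (\<forall>x p q. fa_fin p \<longrightarrow> fa_fin q \<longrightarrow>
        ueq sc br (T (fa_mult (fa_word [x]) p) q)
                  (fa_diff (T (fa_word [x]) (T p q)) (T (T (fa_word [x]) p) q))) \<and>
     (\<forall>u p q. fa_fin p \<longrightarrow> fa_fin q \<longrightarrow>
        ueq sc br (T (fa_word u) (fa_mult p q))
           (\<lambda>w. \<Sum>S\<in>Pow {..<length u}.
                 fa_mult (T (fa_word (nths u S)) p) (T (fa_word (nths u (- S))) q) w))"

text \<open>A * B = A_(1) (A_(2) |> B), on a representative A = sum_w A(w) w.\<close>
definition fa_star :: "(('v, 'k::comm_ring_1) fa \<Rightarrow> ('v, 'k) fa \<Rightarrow> ('v, 'k) fa)
    \<Rightarrow> ('v, 'k) fa \<Rightarrow> ('v, 'k) fa \<Rightarrow> ('v, 'k) fa" where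
  "fa_star T p q = (\<lambda>w. \<Sum>u\<in>{u. p u \<noteq> 0}. p u *
      (\<Sum>S\<in>Pow {..<length u}. fa_mult (fa_word (nths u S)) (T (fa_word (nths u (- S))) q) w))"

definition star_prod :: "(('v, 'k::comm_ring_1) fa \<Rightarrow> ('v, 'k) fa \<Rightarrow> ('v, 'k) fa)
    \<Rightarrow> 'v list \<Rightarrow> ('v, 'k) fa" where
  "star_prod T xs = foldr (\<lambda>x acc. fa_star T (fa_word [x]) acc) xs fa_one"

text \<open>By the context this
is exactly the Hopf isomorphism phi.\<close>
definition phi_hom :: "('k::comm_ring_1 \<Rightarrow> 'v::ab_group_add \<Rightarrow> 'v) \<Rightarrow> ('v \<Rightarrow> 'v \<Rightarrow> 'v) \<Rightarrow> ('v \<Rightarrow> 'v \<Rightarrow> 'v)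
    \<Rightarrow> (('v, 'k) fa \<Rightarrow> ('v, 'k) fa \<Rightarrow> ('v, 'k) fa) \<Rightarrow> (('v, 'k) fa \<Rightarrow> ('v, 'k) fa) \<Rightarrow> bool" where
  "phi_hom sc br tri T \<Phi> \<longleftrightarrow>
     (\<forall>p. fa_fin p \<longrightarrow> fa_fin (\<Phi> p)) \<and>
     (\<forall>p p'. fa_fin p \<longrightarrow> fa_fin p' \<longrightarrow> ueq sc (bar_bracket br tri) p p' \<longrightarrow> ueq sc br (\<Phi> p) (\<Phi> p')) \<and>
     (\<forall>c p q. fa_fin p \<longrightarrow> fa_fin q \<longrightarrow>
        ueq sc br (\<Phi> (fa_add (fa_scale c p) q)) (fa_add (fa_scale c (\<Phi> p)) (\<Phi> q))) \<and>
     ueq sc br (\<Phi> fa_one) fa_one \<and>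
     (\<forall>p q. fa_fin p \<longrightarrow> fa_fin q \<longrightarrow>
        ueq sc br (\<Phi> (fa_mult p q)) (fa_star T (\<Phi> p) (\<Phi> q))) \<and>
     (\<forall>x. ueq sc br (\<Phi> (fa_word [x])) (fa_word [x]))"

fun nest :: "('v::zero \<Rightarrow> 'v \<Rightarrow> 'v) \<Rightarrow> 'v list \<Rightarrow> 'v" where
  "nest f [] = 0"
| "nest f [a] = a"
| "nest f (a # b # cs) = f a (nest f (b # cs))"

text \<open>x(B) = x_k1 |> (x_k2 |> ( ... |> x_kl)) for a block B = {k1 < ... < kl}
(indices 0-based: x_(i+1) = xs ! i).\<close>
definition block_elem :: "('v::zero \<Rightarrow> 'v \<Rightarrow> 'v) \<Rightarrow> 'v list \<Rightarrow> nat set \<Rightarrow> 'v" where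
  "block_elem tri xs B = nest tri (map (\<lambda>k. xs ! k) (sorted_list_of_set B))"

definition X_part :: "('v::zero \<Rightarrow> 'v \<Rightarrow> 'v) \<Rightarrow> 'v list \<Rightarrow> nat set set \<Rightarrow> ('v, 'k::{zero,one}) fa" where
  "X_part tri xs P = fa_word (map (block_elem tri xs) (sorted_key_list_of_set Max P))"

definition partition_sum :: "('v::zero \<Rightarrow> 'v \<Rightarrow> 'v) \<Rightarrow> 'v list \<Rightarrow> ('v, 'k::comm_ring_1) fa" where
  "partition_sum tri xs =
     (\<lambda>w. \<Sum>P\<in>{P. partition_on {..<length xs} P}. X_part tri xs P w)"

end

theory Submission
  imports Defs
begin


lemma fa_mult_assoc:
  fixes A B C :: "('v, 'k::comm_semiring_1) fa"
  shows "fa_mult (fa_mult A B) C = fa_mult A (fa_mult B C)"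
proof (rule ext)
  fix w :: "'v list"
  define n where "n = length w"
  define g where "g = (\<lambda>j k. A (take j w) * B (take k (drop j w)) * C (drop k (drop j w)))"
  have "fa_mult (fa_mult A B) C w = (\<Sum>i\<le>n. \<Sum>j\<le>i. g j (i - j))"
    unfolding fa_mult_def n_def g_def
    by (auto simp: sum_distrib_right min_def drop_take drop_drop intro!: sum.cong)
  also have "\<dots> = (\<Sum>(j,k)\<in>{(j,k). j+k \<le> n}. g j k)"
    by (rule sum.triangle_reindex_eq[symmetric])
  also have "\<dots> = (\<Sum>j\<le>n. \<Sum>k\<le>n-j. g j k)"
  proof -
    have "{(j,k). j+k \<le> n} = Sigma {..n} (\<lambda>j. {..n-j})" by auto
    then show ?thesis by (simp add: sum.Sigma)
  qed
  also have "\<dots> = fa_mult A (fa_mult B C) w"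
    unfolding fa_mult_def n_def g_def
    by (auto simp: sum_distrib_left mult.assoc intro!: sum.cong)
  finally show "fa_mult (fa_mult A B) C w = fa_mult A (fa_mult B C) w" .
qed


lemma fa_mult_word_left:
  "fa_mult (fa_word a) q w = (if take (length a) w = a then q (drop (length a) w) else 0)"
proof -
  have "fa_mult (fa_word a) q w = (\<Sum>i\<le>length w. if i = length a \<and> take (length a) w = a then q (drop i w) else 0)"
    unfolding fa_mult_def fa_word_def
  proof (intro sum.cong refl)
    fix i assume i: "i \<in> {..length w}"
    have "take i w = a \<longleftrightarrow> i = length a \<and> take (length a) w = a"
    proof
      assume "take i w = a"
      moreover have "length (take i w) = i" using i by simp
      ultimately show "i = length a \<and> take (length a) w = a" by auto
    qed auto
    then show "(if take i w = a then 1 else 0) * q (drop i w) =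
      (if i = length a \<and> take (length a) w = a then q (drop i w) else 0)" by simp
  qed
  also have "\<dots> = (if take (length a) w = a then q (drop (length a) w) else 0)"
  proof (cases "take (length a) w = a")
    case True
    have "length (take (length a) w) = length a" using True by simp
    then have "length a \<le> length w" by (simp add: min_def split: if_split_asm)
    with True show ?thesis by (simp add: sum.delta')
  qed simp
  finally show ?thesis .
qed

lemma fa_word_mult: "fa_mult (fa_word a) (fa_word b) = (fa_word (a @ b) :: ('v,'k::comm_semiring_1) fa)"
proof (rule ext)
  fix w :: "'v list"
  have e: "take (length a) w = a \<Longrightarrow> w = a @ drop (length a) w" for a
    by (metis append_take_drop_id)
  show "fa_mult (fa_word a) (fa_word b) w = fa_word (a @ b) w"
    by (subst fa_mult_word_left) (auto simp: fa_word_def dest: e)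
qed

lemma fa_mult_one_left[simp]: "fa_mult fa_one q = q"
  by (rule ext) (simp add: fa_one_def fa_mult_word_left)

lemma fa_mult_one_right[simp]: "fa_mult q fa_one = q"
proof (rule ext)
  fix w :: "'a list"
  have "fa_mult q fa_one w = (\<Sum>i\<le>length w. if i = length w then q (take i w) else 0)"
    unfolding fa_mult_def fa_one_def fa_word_def by (intro sum.cong) auto
  then show "fa_mult q fa_one w = q w" by (simp add: sum.delta')
qed

lemma fa_mult_lin_left:
  "fa_mult (\<lambda>w. c * p w + p' w) q = (\<lambda>w. c * fa_mult p q w + fa_mult p' q w)"
  unfolding fa_mult_def by (auto simp: algebra_simps sum.distrib sum_distrib_left)

lemma fa_mult_lin_right:
  "fa_mult q (\<lambda>w. c * p w + p' w) = (\<lambda>w. c * fa_mult q p w + fa_mult q p' w)"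
  unfolding fa_mult_def by (auto simp: algebra_simps sum.distrib sum_distrib_left)

lemma fa_mult_sum_left:
  "fa_mult (\<lambda>w. \<Sum>i\<in>A. c i * f i w) q = (\<lambda>w. \<Sum>i\<in>A. c i * fa_mult (f i) q w)"
  unfolding fa_mult_def by (auto simp: algebra_simps sum_distrib_left sum_distrib_right intro: sum.swap)

lemma fa_mult_sum_right:
  "fa_mult q (\<lambda>w. \<Sum>i\<in>A. c i * f i w) = (\<lambda>w. \<Sum>i\<in>A. c i * fa_mult q (f i) w)"
  unfolding fa_mult_def by (auto simp: algebra_simps sum_distrib_left sum_distrib_right intro: sum.swap)

lemma fa_mult_zero_left[simp]: "fa_mult (\<lambda>w. 0) q = (\<lambda>w. 0)"
  unfolding fa_mult_def by simp
lemma fa_mult_zero_right[simp]: "fa_mult q (\<lambda>w. 0) = (\<lambda>w. 0)"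
  unfolding fa_mult_def by simp

lemma fa_fin_word[simp]: "fa_fin (fa_word u)"
  unfolding fa_fin_def fa_word_def by simp

lemma fa_fin_one[simp]: "fa_fin fa_one"
  unfolding fa_one_def by simp

lemma fa_fin_zero[simp]: "fa_fin (\<lambda>w. 0)"
  unfolding fa_fin_def by simp

lemma fa_fin_lin: "fa_fin p \<Longrightarrow> fa_fin q \<Longrightarrow> fa_fin (\<lambda>w. c * p w + (q w :: 'k::comm_ring_1))"
  unfolding fa_fin_def
  by (rule finite_subset[of _ "{w. p w \<noteq> 0} \<union> {w. q w \<noteq> 0}"]) auto

lemma fa_fin_add[simp]: "fa_fin p \<Longrightarrow> fa_fin q \<Longrightarrow> fa_fin (fa_add p (q :: ('v,'k::comm_ring_1) fa))"
  unfolding fa_fin_def fa_add_def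
  by (rule finite_subset[of _ "{w. p w \<noteq> 0} \<union> {w. q w \<noteq> 0}"]) auto

lemma fa_fin_diff[simp]: "fa_fin p \<Longrightarrow> fa_fin q \<Longrightarrow> fa_fin (fa_diff p (q :: ('v,'k::comm_ring_1) fa))"
  unfolding fa_fin_def fa_diff_def
  by (rule finite_subset[of _ "{w. p w \<noteq> 0} \<union> {w. q w \<noteq> 0}"]) auto

lemma fa_fin_scale[simp]: "fa_fin p \<Longrightarrow> fa_fin (fa_scale c (p :: ('v,'k::mult_zero) fa))"
  unfolding fa_fin_def fa_scale_def
  by (rule finite_subset[of _ "{w. p w \<noteq> 0}"]) auto

lemma fa_fin_sum: "finite A \<Longrightarrow> (\<And>i. i \<in> A \<Longrightarrow> fa_fin (f i)) \<Longrightarrow> fa_fin (\<lambda>w. \<Sum>i\<in>A. (f i w :: 'k::comm_ring_1))"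
proof (induction A rule: finite_induct)
  case empty then show ?case by simp
next
  case (insert a A)
  have "fa_fin (\<lambda>w. 1 * f a w + (\<Sum>i\<in>A. f i w))"
    by (rule fa_fin_lin) (use insert in auto)
  then show ?case using insert by simp
qed

lemma fa_fin_mult[simp]:
  assumes "fa_fin p" "fa_fin q"
  shows "fa_fin (fa_mult p (q :: ('v,'k::comm_semiring_1) fa))"
  unfolding fa_fin_def
proof (rule finite_subset)
  show "{w. fa_mult p q w \<noteq> 0} \<subseteq> (\<lambda>(a,b). a @ b) ` ({w. p w \<noteq> 0} \<times> {w. q w \<noteq> 0})"
  proof
    fix w assume "w \<in> {w. fa_mult p q w \<noteq> 0}"
    then obtain i where "p (take i w) * q (drop i w) \<noteq> 0"
      unfolding fa_mult_def by (auto elim: sum.not_neutral_contains_not_neutral)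
    then show "w \<in> (\<lambda>(a,b). a @ b) ` ({w. p w \<noteq> 0} \<times> {w. q w \<noteq> 0})"
      by (intro image_eqI[of _ _ "(take i w, drop i w)"]) auto
  qed
  show "finite ((\<lambda>(a,b). a @ b) ` ({w. p w \<noteq> 0} \<times> {w. q w \<noteq> 0}))"
    using assms unfolding fa_fin_def by auto
qed

lemma fa_decomp:
  fixes p :: "('v,'k::comm_ring_1) fa"
  assumes "fa_fin p"
  shows "p = (\<lambda>w. \<Sum>u\<in>{u. p u \<noteq> 0}. p u * fa_word u w)"
proof (rule ext)
  fix w
  have "(\<Sum>u\<in>{u. p u \<noteq> 0}. p u * fa_word u w) = (\<Sum>u\<in>{u. p u \<noteq> 0}. if u = w then p u else 0)"
    by (intro sum.cong) (auto simp: fa_word_def)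
  also have "\<dots> = p w" using assms unfolding fa_fin_def by (simp add: sum.delta)
  finally show "p w = (\<Sum>u\<in>{u. p u \<noteq> 0}. p u * fa_word u w)" by simp
qed

lemma span_gen: "s \<in> S \<Longrightarrow> s \<in> fa_span S"
  using fa_span.step[of s S "\<lambda>w. 0" 1] fa_span.zero[of S] by simp

lemma span_add: "p \<in> fa_span S \<Longrightarrow> q \<in> fa_span S \<Longrightarrow> (\<lambda>w. p w + q w) \<in> fa_span S"
proof (induction p rule: fa_span.induct)
  case zero then show ?case by simp
next
  case (step s r c)
  have "(\<lambda>w. c * s w + (\<lambda>w. r w + q w) w) \<in> fa_span S"
    by (rule fa_span.step) (use step in auto)
  then show ?case by (simp add: add.assoc)
qed

lemma span_scale: "p \<in> fa_span S \<Longrightarrow> (\<lambda>w. c * p w) \<in> fa_span S"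
proof (induction p rule: fa_span.induct)
  case zero then show ?case by (simp add: fa_span.zero)
next
  case (step s r d)
  have "(\<lambda>w. (c * d) * s w + (\<lambda>w. c * r w) w) \<in> fa_span S"
    by (rule fa_span.step) (use step in auto)
  then show ?case by (simp add: algebra_simps)
qed

lemma span_lin: "p \<in> fa_span S \<Longrightarrow> q \<in> fa_span S \<Longrightarrow> (\<lambda>w. c * p w + d * q w) \<in> fa_span S"
  using span_add[OF span_scale span_scale] by blast

lemma span_sum: "finite A \<Longrightarrow> (\<And>i. i \<in> A \<Longrightarrow> f i \<in> fa_span S) \<Longrightarrow> (\<lambda>w. \<Sum>i\<in>A. f i w) \<in> fa_span S"
proof (induction A rule: finite_induct)
  case empty then show ?case by (simp add: fa_span.zero)
next
  case (insert a A)
  have "(\<lambda>w. f a w + (\<lambda>w. \<Sum>i\<in>A. f i w) w) \<in> fa_span S"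
    by (rule span_add) (use insert in auto)
  then show ?case using insert by simp
qed

lemma span_fin: "p \<in> fa_span S \<Longrightarrow> (\<And>s. s \<in> S \<Longrightarrow> fa_fin s) \<Longrightarrow> fa_fin p"
  by (induction p rule: fa_span.induct) (auto intro: fa_fin_lin)


lemma relator_fin: "r \<in> ue_relators sc br \<Longrightarrow> fa_fin r"
  unfolding ue_relators_def by auto

definition ue_gens :: "('k::comm_ring_1 \<Rightarrow> 'v::ab_group_add \<Rightarrow> 'v) \<Rightarrow> ('v \<Rightarrow> 'v \<Rightarrow> 'v) \<Rightarrow> ('v, 'k) fa set" where
  "ue_gens sc br = {fa_mult (fa_mult (fa_word u) r) (fa_word v) | u r v. r \<in> ue_relators sc br}"

lemma ideal_def': "ue_ideal sc br = fa_span (ue_gens sc br)"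
  unfolding ue_ideal_def ue_gens_def ..

lemma gen_fin: "g \<in> ue_gens sc br \<Longrightarrow> fa_fin g"
  unfolding ue_gens_def using relator_fin by fastforce

lemma ideal_fin: "p \<in> ue_ideal sc br \<Longrightarrow> fa_fin p"
  unfolding ideal_def' using span_fin gen_fin by blast

lemma ideal_zero: "(\<lambda>w. 0) \<in> ue_ideal sc br"
  unfolding ideal_def' by (rule fa_span.zero)

lemma ideal_lin: "p \<in> ue_ideal sc br \<Longrightarrow> q \<in> ue_ideal sc br \<Longrightarrow> (\<lambda>w. c * p w + d * q w) \<in> ue_ideal sc br"
  unfolding ideal_def' by (rule span_lin)

lemma ideal_scale: "p \<in> ue_ideal sc br \<Longrightarrow> (\<lambda>w. c * p w) \<in> ue_ideal sc br"
  unfolding ideal_def' by (rule span_scale)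

lemma ideal_sum: "finite A \<Longrightarrow> (\<And>i. i \<in> A \<Longrightarrow> f i \<in> ue_ideal sc br) \<Longrightarrow> (\<lambda>w. \<Sum>i\<in>A. f i w) \<in> ue_ideal sc br"
  unfolding ideal_def' by (rule span_sum)

lemma ideal_relator: "r \<in> ue_relators sc br \<Longrightarrow> r \<in> ue_ideal sc br"
  unfolding ideal_def' ue_gens_def
  by (rule span_gen) (auto simp: fa_one_def[symmetric] intro!: exI[of _ "[]"])

lemma ideal_mult_word_left: "g \<in> ue_ideal sc br \<Longrightarrow> fa_mult (fa_word a) g \<in> ue_ideal sc br"
  unfolding ideal_def'
proof (induction g rule: fa_span.induct)
  case zero then show ?case by (simp add: fa_span.zero)
next
  case (step s r c)
  from step(1) obtain u rl v where s: "s = fa_mult (fa_mult (fa_word u) rl) (fa_word v)" "rl \<in> ue_relators sc br"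
    unfolding ue_gens_def by blast
  have "fa_mult (fa_word a) s = fa_mult (fa_mult (fa_word (a @ u)) rl) (fa_word v)"
    by (simp add: s fa_mult_assoc flip: fa_word_mult)
  then have "fa_mult (fa_word a) s \<in> ue_gens sc br" using s(2) unfolding ue_gens_def by blast
  then show ?case
    by (simp add: fa_mult_lin_right) (rule fa_span.step, auto intro: step)
qed

lemma ideal_mult_word_right: "g \<in> ue_ideal sc br \<Longrightarrow> fa_mult g (fa_word a) \<in> ue_ideal sc br"
  unfolding ideal_def'
proof (induction g rule: fa_span.induct)
  case zero then show ?case by (simp add: fa_span.zero)
next
  case (step s r c)
  from step(1) obtain u rl v where s: "s = fa_mult (fa_mult (fa_word u) rl) (fa_word v)" "rl \<in> ue_relators sc br"
    unfolding ue_gens_def by blast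
  have "fa_mult s (fa_word a) = fa_mult (fa_mult (fa_word u) rl) (fa_word (v @ a))"
    by (simp add: s fa_mult_assoc flip: fa_word_mult)
  then have "fa_mult s (fa_word a) \<in> ue_gens sc br" using s(2) unfolding ue_gens_def by blast
  then show ?case
    by (simp add: fa_mult_lin_left) (rule fa_span.step, auto intro: step)
qed

lemma ideal_mult_left:
  assumes "fa_fin p" "g \<in> ue_ideal sc br"
  shows "fa_mult p g \<in> ue_ideal sc br"
proof -
  have "fa_mult p g = fa_mult (\<lambda>w. \<Sum>u\<in>{u. p u \<noteq> 0}. p u * fa_word u w) g"
    using fa_decomp[OF assms(1)] by simp
  also have "\<dots> = (\<lambda>w. \<Sum>u\<in>{u. p u \<noteq> 0}. p u * fa_mult (fa_word u) g w)"
    by (rule fa_mult_sum_left)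
  also have "\<dots> \<in> ue_ideal sc br"
    using assms by (intro ideal_sum ideal_scale ideal_mult_word_left) (auto simp: fa_fin_def)
  finally show ?thesis .
qed

lemma ideal_mult_right:
  assumes "fa_fin p" "g \<in> ue_ideal sc br"
  shows "fa_mult g p \<in> ue_ideal sc br"
proof -
  have "fa_mult g p = fa_mult g (\<lambda>w. \<Sum>u\<in>{u. p u \<noteq> 0}. p u * fa_word u w)"
    using fa_decomp[OF assms(1)] by simp
  also have "\<dots> = (\<lambda>w. \<Sum>u\<in>{u. p u \<noteq> 0}. p u * fa_mult g (fa_word u) w)"
    by (rule fa_mult_sum_right)
  also have "\<dots> \<in> ue_ideal sc br"
    using assms by (intro ideal_sum ideal_scale ideal_mult_word_right) (auto simp: fa_fin_def)
  finally show ?thesis .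
qed

lemma ueq_zero_iff: "ueq sc br p (\<lambda>w. 0) \<longleftrightarrow> p \<in> ue_ideal sc br"
  unfolding ueq_def fa_diff_def by simp

lemma ueq_eqI: "p = q \<Longrightarrow> ueq sc br p q"
  unfolding ueq_def fa_diff_def by (simp add: ideal_zero)

lemma ueq_refl[simp]: "ueq sc br p p"
  by (rule ueq_eqI) simp

lemma ueq_sym: "ueq sc br p q \<Longrightarrow> ueq sc br q p"
  unfolding ueq_def fa_diff_def
  using ideal_lin[OF _ ideal_zero, of "\<lambda>w. p w - q w" sc br "-1" 0] by simp

lemma ueq_trans[trans]: "ueq sc br p q \<Longrightarrow> ueq sc br q r \<Longrightarrow> ueq sc br p r"
  unfolding ueq_def fa_diff_def
  using ideal_lin[of "\<lambda>w. p w - q w" sc br "\<lambda>w. q w - r w" 1 1] by simp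

lemma ueq_lin: "ueq sc br p p' \<Longrightarrow> ueq sc br q q' \<Longrightarrow>
   ueq sc br (\<lambda>w. c * p w + d * q w) (\<lambda>w. c * p' w + d * q' w)"
  unfolding ueq_def fa_diff_def
  using ideal_lin[of "\<lambda>w. p w - p' w" sc br "\<lambda>w. q w - q' w" c d]
  by (simp add: algebra_simps)

lemma ueq_add: "ueq sc br p p' \<Longrightarrow> ueq sc br q q' \<Longrightarrow> ueq sc br (fa_add p q) (fa_add p' q')"
  using ueq_lin[of sc br p p' q q' 1 1] unfolding fa_add_def by simp

lemma ueq_diff: "ueq sc br p p' \<Longrightarrow> ueq sc br q q' \<Longrightarrow> ueq sc br (fa_diff p q) (fa_diff p' q')"
  using ueq_lin[of sc br p p' q q' 1 "-1"] unfolding fa_diff_def by simp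

lemma ueq_scale: "ueq sc br p p' \<Longrightarrow> ueq sc br (fa_scale c p) (fa_scale c p')"
  using ueq_lin[of sc br p p' p p' c 0] unfolding fa_scale_def by simp

lemma ueq_sum: "finite A \<Longrightarrow> (\<And>i. i \<in> A \<Longrightarrow> ueq sc br (f i) (g i)) \<Longrightarrow>
    ueq sc br (\<lambda>w. \<Sum>i\<in>A. f i w) (\<lambda>w. \<Sum>i\<in>A. g i w)"
  unfolding ueq_def fa_diff_def
  using ideal_sum[of A "\<lambda>i w. f i w - g i w" sc br] by (simp add: sum_subtractf)

lemma ueq_mult:
  assumes "fa_fin p" "fa_fin p'" "fa_fin q" "fa_fin q'" "ueq sc br p p'" "ueq sc br q q'"
  shows "ueq sc br (fa_mult p q) (fa_mult p' q')"
proof -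
  have 1: "fa_mult (fa_diff p p') q \<in> ue_ideal sc br"
    using assms by (intro ideal_mult_right) (auto simp: ueq_def)
  have 2: "fa_mult p' (fa_diff q q') \<in> ue_ideal sc br"
    using assms by (intro ideal_mult_left) (auto simp: ueq_def)
  have "fa_diff (fa_mult p q) (fa_mult p' q') =
     (\<lambda>w. 1 * fa_mult (fa_diff p p') q w + 1 * fa_mult p' (fa_diff q q') w)"
    unfolding fa_diff_def fa_mult_def by (auto simp: algebra_simps sum_subtractf[symmetric] sum.distrib[symmetric] intro!: sum.cong)
  then show ?thesis unfolding ueq_def using ideal_lin[OF 1 2, of 1 1] by simp
qed

lemma ueq_mult_left: "fa_fin p \<Longrightarrow> fa_fin q \<Longrightarrow> fa_fin q' \<Longrightarrow> ueq sc br q q' \<Longrightarrow>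
   ueq sc br (fa_mult p q) (fa_mult p q')"
  by (rule ueq_mult) auto

lemma ueq_mult_right: "fa_fin p \<Longrightarrow> fa_fin p' \<Longrightarrow> fa_fin q \<Longrightarrow> ueq sc br p p' \<Longrightarrow>
   ueq sc br (fa_mult p q) (fa_mult p' q)"
  by (rule ueq_mult) auto


context
  fixes sc :: "'k::comm_ring_1 \<Rightarrow> 'v::ab_group_add \<Rightarrow> 'v" and br tri :: "'v \<Rightarrow> 'v \<Rightarrow> 'v"
    and T :: "('v, 'k) fa \<Rightarrow> ('v, 'k) fa \<Rightarrow> ('v, 'k) fa"
  assumes E: "ext_post_lie sc br tri T"
begin

lemma T_fin: "fa_fin p \<Longrightarrow> fa_fin q \<Longrightarrow> fa_fin (T p q)"
  by (rule E[unfolded ext_post_lie_def, THEN conjunct1, rule_format])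

lemma T_cong: "fa_fin p \<Longrightarrow> fa_fin p' \<Longrightarrow> fa_fin q \<Longrightarrow> fa_fin q' \<Longrightarrow>
    ueq sc br p p' \<Longrightarrow> ueq sc br q q' \<Longrightarrow> ueq sc br (T p q) (T p' q')"
  by (rule E[unfolded ext_post_lie_def, THEN conjunct2, THEN conjunct1, rule_format])

lemma T_cong_left: "fa_fin p \<Longrightarrow> fa_fin p' \<Longrightarrow> fa_fin q \<Longrightarrow>
    ueq sc br p p' \<Longrightarrow> ueq sc br (T p q) (T p' q)"
  by (rule T_cong) simp_all

lemma T_cong_right: "fa_fin p \<Longrightarrow> fa_fin q \<Longrightarrow> fa_fin q' \<Longrightarrow>
    ueq sc br q q' \<Longrightarrow> ueq sc br (T p q) (T p q')"
  by (rule T_cong) simp_all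

lemma T_lin_left: "fa_fin p \<Longrightarrow> fa_fin p' \<Longrightarrow> fa_fin q \<Longrightarrow>
    ueq sc br (T (\<lambda>w. c * p w + p' w) q) (\<lambda>w. c * T p q w + T p' q w)"
  using E[unfolded ext_post_lie_def, THEN conjunct2, THEN conjunct2, THEN conjunct1, rule_format] unfolding fa_add_def fa_scale_def by simp

lemma T_lin_right: "fa_fin p \<Longrightarrow> fa_fin q \<Longrightarrow> fa_fin q' \<Longrightarrow>
    ueq sc br (T p (\<lambda>w. c * q w + q' w)) (\<lambda>w. c * T p q w + T p q' w)"
  using E[unfolded ext_post_lie_def, THEN conjunct2, THEN conjunct2, THEN conjunct2, THEN conjunct1, rule_format] unfolding fa_add_def fa_scale_def by simp

lemma T_xy: "ueq sc br (T (fa_word [x]) (fa_word [y])) (fa_word [tri x y])"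
  by (rule E[unfolded ext_post_lie_def, THEN conjunct2, THEN conjunct2, THEN conjunct2, THEN conjunct2, THEN conjunct1, rule_format])

lemma T_one_left: "fa_fin p \<Longrightarrow> ueq sc br (T fa_one p) p"
  by (rule E[unfolded ext_post_lie_def, THEN conjunct2, THEN conjunct2, THEN conjunct2, THEN conjunct2, THEN conjunct2, THEN conjunct1, rule_format])

lemma T_one_right: "fa_fin p \<Longrightarrow> ueq sc br (T p fa_one) (fa_scale (fa_eps p) fa_one)"
  by (rule E[unfolded ext_post_lie_def, THEN conjunct2, THEN conjunct2, THEN conjunct2, THEN conjunct2, THEN conjunct2, THEN conjunct2, THEN conjunct1, rule_format])

lemma T_xmult: "fa_fin p \<Longrightarrow> fa_fin q \<Longrightarrow>
        ueq sc br (T (fa_mult (fa_word [x]) p) q)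
                  (fa_diff (T (fa_word [x]) (T p q)) (T (T (fa_word [x]) p) q))"
  by (rule E[unfolded ext_post_lie_def, THEN conjunct2, THEN conjunct2, THEN conjunct2, THEN conjunct2, THEN conjunct2, THEN conjunct2, THEN conjunct2, THEN conjunct1, rule_format])

lemma T_prod: "fa_fin p \<Longrightarrow> fa_fin q \<Longrightarrow>
        ueq sc br (T (fa_word u) (fa_mult p q))
           (\<lambda>w. \<Sum>S\<in>Pow {..<length u}.
                 fa_mult (T (fa_word (nths u S)) p) (T (fa_word (nths u (- S))) q) w)"
  by (rule E[unfolded ext_post_lie_def, THEN conjunct2, THEN conjunct2, THEN conjunct2, THEN conjunct2, THEN conjunct2, THEN conjunct2, THEN conjunct2, THEN conjunct2, rule_format])

lemma ueq_double_zero: "ueq sc br X (\<lambda>w. 1 * X w + X w) \<Longrightarrow> ueq sc br X (\<lambda>w. 0)"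
  unfolding ueq_zero_iff ueq_def fa_diff_def
  using ideal_scale[of "\<lambda>w. X w - (1 * X w + X w)" sc br "-1"] by simp

lemma T_zero_left: "fa_fin q \<Longrightarrow> ueq sc br (T (\<lambda>w. 0) q) (\<lambda>w. 0)"
  using T_lin_left[of "\<lambda>w. 0" "\<lambda>w. 0" q 1] by (intro ueq_double_zero) simp

lemma T_zero_right: "fa_fin p \<Longrightarrow> ueq sc br (T p (\<lambda>w. 0)) (\<lambda>w. 0)"
  using T_lin_right[of p "\<lambda>w. 0" "\<lambda>w. 0" 1] by (intro ueq_double_zero) simp

lemma T_sum_left:
  assumes "finite A" "\<And>i. i \<in> A \<Longrightarrow> fa_fin (f i)" "fa_fin q"
  shows "ueq sc br (T (\<lambda>w. \<Sum>i\<in>A. c i * f i w) q) (\<lambda>w. \<Sum>i\<in>A. c i * T (f i) q w)"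
  using assms(1,2)
proof (induction A rule: finite_induct)
  case empty then show ?case using T_zero_left[OF assms(3)] by simp
next
  case (insert a A)
  have fA: "fa_fin (\<lambda>w. \<Sum>i\<in>A. c i * f i w)"
    using insert by (intro fa_fin_sum) (auto intro: fa_fin_lin[of _ "\<lambda>w. 0", simplified])
  have "ueq sc br (T (\<lambda>w. c a * f a w + (\<lambda>w. \<Sum>i\<in>A. c i * f i w) w) q)
     (\<lambda>w. c a * T (f a) q w + T (\<lambda>w. \<Sum>i\<in>A. c i * f i w) q w)"
    using insert fA assms(3) by (intro T_lin_left) auto
  also have "ueq sc br \<dots> (\<lambda>w. c a * T (f a) q w + 1 * (\<lambda>w. \<Sum>i\<in>A. c i * T (f i) q w) w)"
    using ueq_lin[OF ueq_refl[of sc br "T (f a) q"] insert.IH, of "c a" 1] insert by simp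
  finally show ?case using insert by simp
qed

lemma T_sum_right:
  assumes "finite A" "\<And>i. i \<in> A \<Longrightarrow> fa_fin (f i)" "fa_fin p"
  shows "ueq sc br (T p (\<lambda>w. \<Sum>i\<in>A. c i * f i w)) (\<lambda>w. \<Sum>i\<in>A. c i * T p (f i) w)"
  using assms(1,2)
proof (induction A rule: finite_induct)
  case empty then show ?case using T_zero_right[OF assms(3)] by simp
next
  case (insert a A)
  have fA: "fa_fin (\<lambda>w. \<Sum>i\<in>A. c i * f i w)"
    using insert by (intro fa_fin_sum) (auto intro: fa_fin_lin[of _ "\<lambda>w. 0", simplified])
  have "ueq sc br (T p (\<lambda>w. c a * f a w + (\<lambda>w. \<Sum>i\<in>A. c i * f i w) w))
     (\<lambda>w. c a * T p (f a) w + T p (\<lambda>w. \<Sum>i\<in>A. c i * f i w) w)"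
    using insert fA assms(3) by (intro T_lin_right) auto
  also have "ueq sc br \<dots> (\<lambda>w. c a * T p (f a) w + 1 * (\<lambda>w. \<Sum>i\<in>A. c i * T p (f i) w) w)"
    using ueq_lin[OF ueq_refl[of sc br "T p (f a)"] insert.IH, of "c a" 1] insert by simp
  finally show ?case using insert by simp
qed

end


lemma nths_cong: "(\<And>i. i < length xs \<Longrightarrow> i \<in> A \<longleftrightarrow> i \<in> B) \<Longrightarrow> nths xs A = nths xs B"
proof (induction xs arbitrary: A B)
  case Nil then show ?case by simp
next
  case (Cons x xs)
  have "nths xs {j. Suc j \<in> A} = nths xs {j. Suc j \<in> B}"
    using Cons.prems by (intro Cons.IH) auto
  moreover have "0 \<in> A \<longleftrightarrow> 0 \<in> B" using Cons.prems by simp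
  ultimately show ?case by (simp add: nths_Cons)
qed

lemma pow_split:
  fixes f :: "'a list \<Rightarrow> 'a list \<Rightarrow> 'b::comm_monoid_add"
  shows "(\<Sum>S\<in>Pow {..<length (a @ b)}. f (nths (a @ b) S) (nths (a @ b) (- S))) =
    (\<Sum>A\<in>Pow {..<length a}. \<Sum>C\<in>Pow {..<length b}. f (nths a A @ nths b C) (nths a (- A) @ nths b (- C)))"
proof -
  let ?h = "\<lambda>(A, C). f (nths a A @ nths b C) (nths a (- A) @ nths b (- C))"
  have "(\<Sum>S\<in>Pow {..<length (a @ b)}. f (nths (a @ b) S) (nths (a @ b) (- S))) =
      (\<Sum>AC\<in>Pow {..<length a} \<times> Pow {..<length b}. ?h AC)"
  proof (rule sum.reindex_bij_witness[where i = "\<lambda>(A, C). A \<union> (\<lambda>j. j + length a) ` C"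
        and j = "\<lambda>S. (S \<inter> {..<length a}, {j. j + length a \<in> S})"])
    fix S assume S: "S \<in> Pow {..<length (a @ b)}"
    show "(\<lambda>(A, C). A \<union> (\<lambda>j. j + length a) ` C) (S \<inter> {..<length a}, {j. j + length a \<in> S}) = S"
    proof -
      have "x \<in> S \<Longrightarrow> x \<ge> length a \<Longrightarrow> x \<in> (\<lambda>j. j + length a) ` {j. j + length a \<in> S}" for x
        by (rule image_eqI[of _ _ "x - length a"]) auto
      then show ?thesis using not_less by fastforce
    qed
    show "(S \<inter> {..<length a}, {j. j + length a \<in> S}) \<in> Pow {..<length a} \<times> Pow {..<length b}"
      using S by auto
    show "?h (S \<inter> {..<length a}, {j. j + length a \<in> S}) = f (nths (a @ b) S) (nths (a @ b) (- S))"
    proof -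
      have 1: "nths a S = nths a (S \<inter> {..<length a})" by (rule nths_cong) auto
      have 2: "nths a (- S) = nths a (- (S \<inter> {..<length a}))" by (rule nths_cong) auto
      have 3: "- {j. j + length a \<in> S} = {j. j + length a \<notin> S}" by auto
      show ?thesis by (simp add: nths_append 1 2 3)
    qed
  next
    fix AC assume AC: "AC \<in> Pow {..<length a} \<times> Pow {..<length b}"
    obtain A C where AC': "AC = (A, C)" by (cases AC)
    with AC have A: "A \<subseteq> {..<length a}" and C: "C \<subseteq> {..<length b}" by auto
    show "(\<lambda>S. (S \<inter> {..<length a}, {j. j + length a \<in> S})) ((\<lambda>(A, C). A \<union> (\<lambda>j. j + length a) ` C) AC) = AC"
      using A by (auto simp: AC')
    show "(\<lambda>(A, C). A \<union> (\<lambda>j. j + length a) ` C) AC \<in> Pow {..<length (a @ b)}"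
      using A C by (auto simp: AC')
  qed
  also have "\<dots> = (\<Sum>A\<in>Pow {..<length a}. \<Sum>C\<in>Pow {..<length b}. ?h (A, C))"
    by (simp add: sum.cartesian_product)
  finally show ?thesis by simp
qed

definition Bst :: "(('v, 'k::comm_ring_1) fa \<Rightarrow> ('v, 'k) fa \<Rightarrow> ('v, 'k) fa) \<Rightarrow> ('v, 'k) fa \<Rightarrow> 'v list \<Rightarrow> ('v, 'k) fa" where
  "Bst T q u = (\<lambda>w. \<Sum>S\<in>Pow {..<length u}. fa_mult (fa_word (nths u S)) (T (fa_word (nths u (- S))) q) w)"

lemma star_superset:
  assumes "finite F" "{u. p u \<noteq> 0} \<subseteq> F"
  shows "fa_star T p q = (\<lambda>w. \<Sum>u\<in>F. p u * Bst T q u w)"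
  unfolding fa_star_def Bst_def
  by (rule ext, rule sum.mono_neutral_left) (use assms in auto)

lemma star_word: "fa_star T (fa_word u) q = Bst T q u"
proof -
  have "fa_star T (fa_word u) q = (\<lambda>w. \<Sum>u'\<in>{u}. fa_word u u' * Bst T q u' w)"
    by (rule star_superset) (auto simp: fa_word_def)
  then show ?thesis by (simp add: fa_word_def)
qed

lemma star_lin:
  assumes "fa_fin p" "fa_fin p'"
  shows "fa_star T (\<lambda>w. c * p w + p' w) q = (\<lambda>w. c * fa_star T p q w + fa_star T p' q w)"
proof -
  let ?F = "{u. p u \<noteq> 0} \<union> {u. p' u \<noteq> 0}"
  have fin: "finite ?F" using assms by (simp add: fa_fin_def)
  have "fa_star T (\<lambda>w. c * p w + p' w) q = (\<lambda>w. \<Sum>u\<in>?F. (c * p u + p' u) * Bst T q u w)"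
    by (rule star_superset[OF fin]) auto
  moreover have "fa_star T p q = (\<lambda>w. \<Sum>u\<in>?F. p u * Bst T q u w)"
    by (rule star_superset[OF fin]) auto
  moreover have "fa_star T p' q = (\<lambda>w. \<Sum>u\<in>?F. p' u * Bst T q u w)"
    by (rule star_superset[OF fin]) auto
  ultimately show ?thesis
    by (simp add: algebra_simps sum.distrib sum_distrib_left)
qed

lemma star_zero: "fa_star T (\<lambda>w. 0) q = (\<lambda>w. 0)"
  unfolding fa_star_def by simp


definition Hf :: "(('v, 'k::comm_ring_1) fa \<Rightarrow> ('v, 'k) fa \<Rightarrow> ('v, 'k) fa) \<Rightarrow> ('v, 'k) fa \<Rightarrow>
   'v list \<Rightarrow> 'v list \<Rightarrow> 'v list \<Rightarrow> 'v list \<Rightarrow> ('v, 'k) fa \<Rightarrow> ('v, 'k) fa \<Rightarrow> ('v, 'k) fa" where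
  "Hf T q a a' b b' P Q = fa_mult (fa_mult (fa_word a) (fa_mult P (fa_word b)))
      (T (fa_mult (fa_word a') (fa_mult Q (fa_word b'))) q)"

definition Sig where
  "Sig T q a a' b b' m = (\<lambda>w. \<Sum>M\<in>Pow {..<length m}. Hf T q a a' b b' (fa_word (nths m M)) (fa_word (nths m (- M))) w)"

lemma Pow_lessThan_1: "Pow {..<Suc 0} = {{}, {0}}"
  by (auto simp: lessThan_Suc)

lemma Pow_lessThan_2: "Pow {..<Suc (Suc 0)} = {{}, {0}, {Suc 0}, {0, Suc 0}}"
  by (auto simp: lessThan_Suc Pow_insert)

lemma Sig_single: "Sig T q a a' b b' [z] = (\<lambda>w. Hf T q a a' b b' fa_one (fa_word [z]) w + Hf T q a a' b b' (fa_word [z]) fa_one w)"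
  unfolding Sig_def by (auto simp: Pow_lessThan_1 fa_one_def)

lemma Sig_pair: "Sig T q a a' b b' [x, y] = (\<lambda>w. Hf T q a a' b b' fa_one (fa_word [x, y]) w +
   Hf T q a a' b b' (fa_word [x]) (fa_word [y]) w + Hf T q a a' b b' (fa_word [y]) (fa_word [x]) w +
   Hf T q a a' b b' (fa_word [x, y]) fa_one w)"
  unfolding Sig_def by (auto simp: Pow_lessThan_2 fa_one_def nths_Cons)

lemma Bst_split:
  "Bst T q (u @ m @ v) = (\<lambda>w. \<Sum>A\<in>Pow {..<length u}. \<Sum>C\<in>Pow {..<length v}.
      Sig T q (nths u A) (nths u (- A)) (nths v C) (nths v (- C)) m w)"
proof (rule ext)
  fix w
  let ?g = "\<lambda>s t. fa_mult (fa_word s) (T (fa_word t) q) w"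
  have "Bst T q (u @ m @ v) w = (\<Sum>S\<in>Pow {..<length (u @ (m @ v))}. ?g (nths (u @ (m @ v)) S) (nths (u @ (m @ v)) (- S)))"
    unfolding Bst_def by simp
  also have "\<dots> = (\<Sum>A\<in>Pow {..<length u}. \<Sum>S\<in>Pow {..<length (m @ v)}.
       ?g (nths u A @ nths (m @ v) S) (nths u (- A) @ nths (m @ v) (- S)))"
    by (rule pow_split)
  also have "\<dots> = (\<Sum>A\<in>Pow {..<length u}. \<Sum>M\<in>Pow {..<length m}. \<Sum>C\<in>Pow {..<length v}.
       ?g (nths u A @ nths m M @ nths v C) (nths u (- A) @ nths m (- M) @ nths v (- C)))"
    by (rule sum.cong[OF refl], rule pow_split[where f = "\<lambda>s t. ?g (nths u _ @ s) (nths u (- _) @ t)"])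
  also have "\<dots> = (\<Sum>A\<in>Pow {..<length u}. \<Sum>C\<in>Pow {..<length v}. \<Sum>M\<in>Pow {..<length m}.
       ?g (nths u A @ nths m M @ nths v C) (nths u (- A) @ nths m (- M) @ nths v (- C)))"
    by (rule sum.cong[OF refl], rule sum.swap)
  also have "\<dots> = (\<Sum>A\<in>Pow {..<length u}. \<Sum>C\<in>Pow {..<length v}.
      Sig T q (nths u A) (nths u (- A)) (nths v C) (nths v (- C)) m w)"
    unfolding Sig_def Hf_def by (simp add: fa_word_mult)
  finally show "Bst T q (u @ m @ v) w = (\<Sum>A\<in>Pow {..<length u}. \<Sum>C\<in>Pow {..<length v}.
      Sig T q (nths u A) (nths u (- A)) (nths v C) (nths v (- C)) m w)" .
qed


lemma fa_fin_plus[simp]: "fa_fin p \<Longrightarrow> fa_fin q \<Longrightarrow> fa_fin (\<lambda>w. p w + (q w :: 'k::comm_ring_1))"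
  using fa_fin_lin[of p q 1] by simp

lemma fa_fin_times[simp]: "fa_fin p \<Longrightarrow> fa_fin (\<lambda>w. c * (p w :: 'k::comm_ring_1))"
  using fa_fin_lin[of p "\<lambda>w. 0" c] by simp

context
  fixes sc :: "'k::comm_ring_1 \<Rightarrow> 'v::ab_group_add \<Rightarrow> 'v" and br tri :: "'v \<Rightarrow> 'v \<Rightarrow> 'v"
    and T :: "('v, 'k) fa \<Rightarrow> ('v, 'k) fa \<Rightarrow> ('v, 'k) fa"
  assumes E: "ext_post_lie sc br tri T"
begin

lemma Hf_fin: "fa_fin q \<Longrightarrow> fa_fin P \<Longrightarrow> fa_fin Q \<Longrightarrow> fa_fin (Hf T q a a' b b' P Q)"
  unfolding Hf_def using T_fin[OF E] by simp

lemma Hf_cong1: "fa_fin q \<Longrightarrow> fa_fin P \<Longrightarrow> fa_fin P' \<Longrightarrow> fa_fin Q \<Longrightarrow> ueq sc br P P' \<Longrightarrow>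
    ueq sc br (Hf T q a a' b b' P Q) (Hf T q a a' b b' P' Q)"
  unfolding Hf_def
  by (intro ueq_mult_right ueq_mult_left) (simp_all add: T_fin[OF E])

lemma Hf_cong2: "fa_fin q \<Longrightarrow> fa_fin P \<Longrightarrow> fa_fin Q \<Longrightarrow> fa_fin Q' \<Longrightarrow> ueq sc br Q Q' \<Longrightarrow>
    ueq sc br (Hf T q a a' b b' P Q) (Hf T q a a' b b' P Q')"
  unfolding Hf_def
  by (intro ueq_mult_left T_cong_left[OF E] ueq_mult_right) (simp_all add: T_fin[OF E])

lemma Hf_lin1: "Hf T q a a' b b' (\<lambda>w. c * P1 w + P2 w) Q = (\<lambda>w. c * Hf T q a a' b b' P1 Q w + Hf T q a a' b b' P2 Q w)"
  unfolding Hf_def by (simp add: fa_mult_lin_left fa_mult_lin_right)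

lemma Hf_lin2:
  assumes "fa_fin q" "fa_fin P" "fa_fin Q1" "fa_fin Q2"
  shows "ueq sc br (Hf T q a a' b b' P (\<lambda>w. c * Q1 w + Q2 w)) (\<lambda>w. c * Hf T q a a' b b' P Q1 w + Hf T q a a' b b' P Q2 w)"
proof -
  define X1 where "X1 = fa_mult (fa_word a') (fa_mult Q1 (fa_word b'))"
  define X2 where "X2 = fa_mult (fa_word a') (fa_mult Q2 (fa_word b'))"
  define L where "L = fa_mult (fa_word a) (fa_mult P (fa_word b))"
  have fX: "fa_fin X1" "fa_fin X2" "fa_fin L" using assms by (simp_all add: X1_def X2_def L_def)
  have e1: "Hf T q a a' b b' P (\<lambda>w. c * Q1 w + Q2 w) = fa_mult L (T (\<lambda>w. c * X1 w + X2 w) q)"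
    unfolding Hf_def X1_def X2_def L_def by (simp add: fa_mult_lin_left fa_mult_lin_right)
  have e2: "fa_mult L (\<lambda>w. c * T X1 q w + T X2 q w) = (\<lambda>w. c * Hf T q a a' b b' P Q1 w + Hf T q a a' b b' P Q2 w)"
    unfolding Hf_def X1_def X2_def L_def by (simp add: fa_mult_lin_right)
  have u: "ueq sc br (T (\<lambda>w. c * X1 w + X2 w) q) (\<lambda>w. c * T X1 q w + T X2 q w)"
    by (rule T_lin_left[OF E fX(1,2) assms(1)])
  have f1: "fa_fin (T (\<lambda>w. c * X1 w + X2 w) q)"
    by (rule T_fin[OF E fa_fin_lin[OF fX(1,2)] assms(1)])
  have f2: "fa_fin (\<lambda>w. c * T X1 q w + T X2 q w)"
    by (rule fa_fin_lin[OF T_fin[OF E fX(1) assms(1)] T_fin[OF E fX(2) assms(1)]])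
  have "ueq sc br (fa_mult L (T (\<lambda>w. c * X1 w + X2 w) q)) (fa_mult L (\<lambda>w. c * T X1 q w + T X2 q w))"
    by (rule ueq_mult_left[OF fX(3) f1 f2 u])
  then show ?thesis unfolding e1 e2 .
qed

lemma ueq_to_ideal: "ueq sc br X Y \<Longrightarrow> (\<lambda>w. X w - Y w) \<in> ue_ideal sc br"
  unfolding ueq_def fa_diff_def .

lemma ideal_eq: "X \<in> ue_ideal sc br \<Longrightarrow> X = Y \<Longrightarrow> Y \<in> ue_ideal sc br" by simp

lemma Sig_rel_add:
  assumes q: "fa_fin q"
  shows "(\<lambda>w. 1 * Sig T q a a' b b' [x + y] w + (- 1) * Sig T q a a' b b' [x] w + (- 1) * Sig T q a a' b b' [y] w)
    \<in> ue_ideal sc br"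
proof -
  let ?H = "Hf T q a a' b b'"
  have R: "ueq sc br (fa_word [x + y]) (\<lambda>w. 1 * fa_word [x] w + fa_word [y] w)"
  proof -
    have "fa_diff (fa_diff (fa_word [x + y]) (fa_word [x])) (fa_word [y]) \<in> ue_ideal sc br"
      by (rule ideal_relator) (auto simp: ue_relators_def)
    then show ?thesis unfolding ueq_def fa_diff_def by (simp add: algebra_simps)
  qed
  have 1: "ueq sc br (?H (fa_word [x + y]) fa_one) (\<lambda>w. 1 * ?H (fa_word [x]) fa_one w + ?H (fa_word [y]) fa_one w)"
    using Hf_cong1[OF q fa_fin_word fa_fin_lin[OF fa_fin_word fa_fin_word] fa_fin_one R, where a=a and a'=a' and b=b and b'=b']
    unfolding Hf_lin1 .
  have 2: "ueq sc br (?H fa_one (fa_word [x + y])) (\<lambda>w. 1 * ?H fa_one (fa_word [x]) w + ?H fa_one (fa_word [y]) w)"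
    by (rule ueq_trans[OF Hf_cong2[OF q _ _ _ R] Hf_lin2]) (simp_all add: q fa_fin_lin)
  have "(\<lambda>w. ?H fa_one (fa_word [x + y]) w - (1 * ?H fa_one (fa_word [x]) w + ?H fa_one (fa_word [y]) w)
         + (?H (fa_word [x + y]) fa_one w - (1 * ?H (fa_word [x]) fa_one w + ?H (fa_word [y]) fa_one w))) \<in> ue_ideal sc br"
    using ideal_lin[OF ueq_to_ideal[OF 2] ueq_to_ideal[OF 1], of 1 1] by simp
  then show ?thesis
    by (rule ideal_eq) (simp add: Sig_single algebra_simps)
qed

lemma Sig_rel_scale:
  assumes q: "fa_fin q"
  shows "(\<lambda>w. 1 * Sig T q a a' b b' [sc c x] w + (- c) * Sig T q a a' b b' [x] w + 0 * Sig T q a a' b b' z w)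
    \<in> ue_ideal sc br"
proof -
  let ?H = "Hf T q a a' b b'"
  have R: "ueq sc br (fa_word [sc c x]) (\<lambda>w. c * fa_word [x] w + (\<lambda>w. 0) w)"
  proof -
    have "fa_diff (fa_word [sc c x]) (fa_scale c (fa_word [x])) \<in> ue_ideal sc br"
      by (rule ideal_relator) (auto simp: ue_relators_def)
    then show ?thesis unfolding ueq_def fa_diff_def fa_scale_def by (simp add: algebra_simps)
  qed
  have 1: "ueq sc br (?H (fa_word [sc c x]) fa_one) (\<lambda>w. c * ?H (fa_word [x]) fa_one w + ?H (\<lambda>w. 0) fa_one w)"
    using Hf_cong1[OF q fa_fin_word fa_fin_lin[OF fa_fin_word fa_fin_zero] fa_fin_one R, where a=a and a'=a' and b=b and b'=b']
    unfolding Hf_lin1 .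
  have 2: "ueq sc br (?H fa_one (fa_word [sc c x])) (\<lambda>w. c * ?H fa_one (fa_word [x]) w + ?H fa_one (\<lambda>w. 0) w)"
    by (rule ueq_trans[OF Hf_cong2[OF q _ _ _ R] Hf_lin2]) (simp_all add: q fa_fin_lin)
  have z1: "?H (\<lambda>w. 0) fa_one = (\<lambda>w. 0)" unfolding Hf_def by simp
  have z2: "ueq sc br (?H fa_one (\<lambda>w. 0)) (\<lambda>w. 0)"
  proof -
    have "ueq sc br (fa_mult (fa_mult (fa_word a) (fa_word b)) (T (\<lambda>w. 0) q))
       (fa_mult (fa_mult (fa_word a) (fa_word b)) (\<lambda>w. 0))"
      by (intro ueq_mult_left T_zero_left[OF E] T_fin[OF E]) (simp_all add: q)
    then show ?thesis unfolding Hf_def by simp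
  qed
  have "(\<lambda>w. ?H fa_one (fa_word [sc c x]) w - (c * ?H fa_one (fa_word [x]) w + ?H fa_one (\<lambda>w. 0) w)
         + (?H (fa_word [sc c x]) fa_one w - (c * ?H (fa_word [x]) fa_one w + ?H (\<lambda>w. 0) fa_one w))
         + (?H fa_one (\<lambda>w. 0) w - 0)) \<in> ue_ideal sc br"
    using ideal_lin[OF ideal_lin[OF ueq_to_ideal[OF 2] ueq_to_ideal[OF 1], of 1 1] ueq_to_ideal[OF z2], of 1 1]
    by simp
  then show ?thesis
    by (rule ideal_eq) (simp add: Sig_single algebra_simps z1)
qed

lemma Sig_rel_lie:
  assumes q: "fa_fin q"
  shows "(\<lambda>w. 1 * Sig T q a a' b b' [x, y] w + (- 1) * Sig T q a a' b b' [y, x] w + (- 1) * Sig T q a a' b b' [br x y] w)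
    \<in> ue_ideal sc br"
proof -
  let ?H = "Hf T q a a' b b'"
  have R: "ueq sc br (fa_word [x, y]) (\<lambda>w. 1 * fa_word [y, x] w + fa_word [br x y] w)"
  proof -
    have "fa_diff (fa_diff (fa_word [x, y]) (fa_word [y, x])) (fa_word [br x y]) \<in> ue_ideal sc br"
      by (rule ideal_relator) (auto simp: ue_relators_def)
    then show ?thesis unfolding ueq_def fa_diff_def by (simp add: algebra_simps)
  qed
  have 1: "ueq sc br (?H (fa_word [x, y]) fa_one) (\<lambda>w. 1 * ?H (fa_word [y, x]) fa_one w + ?H (fa_word [br x y]) fa_one w)"
    using Hf_cong1[OF q fa_fin_word fa_fin_lin[OF fa_fin_word fa_fin_word] fa_fin_one R, where a=a and a'=a' and b=b and b'=b']
    unfolding Hf_lin1 .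
  have 2: "ueq sc br (?H fa_one (fa_word [x, y])) (\<lambda>w. 1 * ?H fa_one (fa_word [y, x]) w + ?H fa_one (fa_word [br x y]) w)"
    by (rule ueq_trans[OF Hf_cong2[OF q _ _ _ R] Hf_lin2]) (simp_all add: q fa_fin_lin)
  have "(\<lambda>w. ?H fa_one (fa_word [x, y]) w - (1 * ?H fa_one (fa_word [y, x]) w + ?H fa_one (fa_word [br x y]) w)
         + (?H (fa_word [x, y]) fa_one w - (1 * ?H (fa_word [y, x]) fa_one w + ?H (fa_word [br x y]) fa_one w))) \<in> ue_ideal sc br"
    using ideal_lin[OF ueq_to_ideal[OF 2] ueq_to_ideal[OF 1], of 1 1] by simp
  then show ?thesis
    by (rule ideal_eq) (simp add: Sig_single Sig_pair algebra_simps)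
qed

end


context
  fixes sc :: "'k::comm_ring_1 \<Rightarrow> 'v::ab_group_add \<Rightarrow> 'v" and br tri :: "'v \<Rightarrow> 'v \<Rightarrow> 'v"
    and T :: "('v, 'k) fa \<Rightarrow> ('v, 'k) fa \<Rightarrow> ('v, 'k) fa"
  assumes E: "ext_post_lie sc br tri T"
begin

lemma relator_cases:
  assumes "r \<in> ue_relators sc br" "fa_fin q"
  obtains c1 c2 c3 m1 m2 m3 where
    "r = (\<lambda>w. c1 * fa_word m1 w + (c2 * fa_word m2 w + (c3 * fa_word m3 w + 0)))"
    "\<And>a a' b b'. (\<lambda>w. c1 * Sig T q a a' b b' m1 w + c2 * Sig T q a a' b b' m2 w + c3 * Sig T q a a' b b' m3 w) \<in> ue_ideal sc br"
proof -
  consider (add) x y where "r = fa_diff (fa_diff (fa_word [x + y]) (fa_word [x])) (fa_word [y])"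
    | (scl) c x where "r = fa_diff (fa_word [sc c x]) (fa_scale c (fa_word [x]))"
    | (lie) x y where "r = fa_diff (fa_diff (fa_word [x, y]) (fa_word [y, x])) (fa_word [br x y])"
    using assms(1) unfolding ue_relators_def by blast
  then show ?thesis
  proof cases
    case add
    show ?thesis
      by (rule that[of 1 "[x + y]" "-1" "[x]" "-1" "[y]"])
        (simp add: add fa_diff_def fun_eq_iff algebra_simps, rule Sig_rel_add[OF E assms(2)])
  next
    case scl
    show ?thesis
      by (rule that[of 1 "[sc c x]" "-c" "[x]" 0 "[x]"])
        (simp add: scl fa_diff_def fa_scale_def fun_eq_iff algebra_simps, rule Sig_rel_scale[OF E assms(2)])
  next
    case lie
    show ?thesis
      by (rule that[of 1 "[x, y]" "-1" "[y, x]" "-1" "[br x y]"])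
        (simp add: lie fa_diff_def fun_eq_iff algebra_simps, rule Sig_rel_lie[OF E assms(2)])
  qed
qed

lemma star_gen:
  assumes "g \<in> ue_gens sc br" "fa_fin q"
  shows "fa_star T g q \<in> ue_ideal sc br"
proof -
  obtain u r v where g: "g = fa_mult (fa_mult (fa_word u) r) (fa_word v)" and r: "r \<in> ue_relators sc br"
    using assms(1) unfolding ue_gens_def by blast
  obtain c1 m1 c2 m2 c3 m3 where
    rr: "r = (\<lambda>w. c1 * fa_word m1 w + (c2 * fa_word m2 w + (c3 * fa_word m3 w + 0)))" and
    sg: "\<And>a a' b b'. (\<lambda>w. c1 * Sig T q a a' b b' m1 w + c2 * Sig T q a a' b b' m2 w + c3 * Sig T q a a' b b' m3 w) \<in> ue_ideal sc br"
    by (rule relator_cases[OF r assms(2)]) (rule that; assumption)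
  have g2: "g = (\<lambda>w. c1 * fa_word (u @ m1 @ v) w + (\<lambda>w. c2 * fa_word (u @ m2 @ v) w + (\<lambda>w. c3 * fa_word (u @ m3 @ v) w + (\<lambda>w. 0) w) w) w)"
  proof -
    have "g = fa_mult (fa_mult (fa_word u) (\<lambda>w. c1 * fa_word m1 w + (\<lambda>w. c2 * fa_word m2 w + (\<lambda>w. c3 * fa_word m3 w + (\<lambda>w. 0) w) w) w)) (fa_word v)"
      unfolding g rr by simp
    then show ?thesis
      by (simp only: fa_mult_lin_left fa_mult_lin_right fa_mult_zero_left fa_mult_zero_right
          fa_word_mult fa_mult_assoc append_assoc)
  qed
  have "fa_star T g q = (\<lambda>w. c1 * Bst T q (u @ m1 @ v) w + (c2 * Bst T q (u @ m2 @ v) w + (c3 * Bst T q (u @ m3 @ v) w + 0)))"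
    unfolding g2 by (simp only: star_lin fa_fin_lin fa_fin_word fa_fin_zero star_zero star_word)
  also have "\<dots> = (\<lambda>w. \<Sum>A\<in>Pow {..<length u}. \<Sum>C\<in>Pow {..<length v}.
      (\<lambda>w. c1 * Sig T q (nths u A) (nths u (- A)) (nths v C) (nths v (- C)) m1 w +
           c2 * Sig T q (nths u A) (nths u (- A)) (nths v C) (nths v (- C)) m2 w +
           c3 * Sig T q (nths u A) (nths u (- A)) (nths v C) (nths v (- C)) m3 w) w)"
    by (simp add: Bst_split sum_distrib_left sum.distrib algebra_simps)
  also have "\<dots> \<in> ue_ideal sc br"
    by (intro ideal_sum sg) auto
  finally show ?thesis .
qed

lemma star_ideal:
  assumes "p \<in> ue_ideal sc br" "fa_fin q"
  shows "fa_star T p q \<in> ue_ideal sc br"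
  using assms(1) unfolding ideal_def'
proof (induction p rule: fa_span.induct)
  case zero then show ?case by (simp add: star_zero fa_span.zero)
next
  case (step s r c)
  have fs: "fa_fin s" using gen_fin step(1) by blast
  have fr: "fa_fin r" using span_fin[OF step(2)] gen_fin by blast
  have "fa_star T (\<lambda>w. c * s w + r w) q = (\<lambda>w. c * fa_star T s q w + 1 * fa_star T r q w)"
    using star_lin[OF fs fr] by simp
  moreover have "(\<lambda>w. c * fa_star T s q w + 1 * fa_star T r q w) \<in> fa_span (ue_gens sc br)"
    using ideal_lin[OF star_gen[OF step(1) assms(2)] step(3)[unfolded ideal_def'[symmetric]]] 
    unfolding ideal_def' by blast
  ultimately show ?case by simp
qed

lemma star_cong_left:
  assumes "fa_fin p" "fa_fin p'" "fa_fin q" "ueq sc br p p'"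
  shows "ueq sc br (fa_star T p q) (fa_star T p' q)"
proof -
  have d: "fa_diff p p' \<in> ue_ideal sc br" using assms(4) unfolding ueq_def .
  have "p = (\<lambda>w. 1 * fa_diff p p' w + p' w)" unfolding fa_diff_def by simp
  then have "fa_star T p q = (\<lambda>w. 1 * fa_star T (fa_diff p p') q w + fa_star T p' q w)"
    using star_lin[OF fa_fin_diff[OF assms(1,2)] assms(2), where c=1 and q=q and T=T] by metis
  then have "fa_diff (fa_star T p q) (fa_star T p' q) = fa_star T (fa_diff p p') q"
    unfolding fa_diff_def by (rule ssubst) simp
  then show ?thesis unfolding ueq_def using star_ideal[OF d assms(3)] by simp
qed

end


context
  fixes sc :: "'k::comm_ring_1 \<Rightarrow> 'v::ab_group_add \<Rightarrow> 'v" and br tri :: "'v \<Rightarrow> 'v \<Rightarrow> 'v"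
    and T :: "('v, 'k) fa \<Rightarrow> ('v, 'k) fa \<Rightarrow> ('v, 'k) fa"
  assumes E: "ext_post_lie sc br tri T"
begin

lemma Bst_fin: "fa_fin q \<Longrightarrow> fa_fin (Bst T q u)"
  unfolding Bst_def by (intro fa_fin_sum fa_fin_mult fa_fin_word T_fin[OF E]) auto

lemma star_supp: "fa_fin p \<Longrightarrow> fa_star T p q = (\<lambda>w. \<Sum>u\<in>{u. p u \<noteq> 0}. p u * Bst T q u w)"
  by (rule star_superset) (auto simp: fa_fin_def)

lemma star_fin: "fa_fin p \<Longrightarrow> fa_fin q \<Longrightarrow> fa_fin (fa_star T p q)"
  unfolding star_supp
  by (intro fa_fin_sum fa_fin_times Bst_fin) (auto simp: fa_fin_def)

lemma Bst_cong: "fa_fin q \<Longrightarrow> fa_fin q' \<Longrightarrow> ueq sc br q q' \<Longrightarrow> ueq sc br (Bst T q u) (Bst T q' u)"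
  unfolding Bst_def
  by (intro ueq_sum ueq_mult_left T_cong_right[OF E] T_fin[OF E]) auto

lemma star_cong_right:
  assumes "fa_fin p" "fa_fin q" "fa_fin q'" "ueq sc br q q'"
  shows "ueq sc br (fa_star T p q) (fa_star T p q')"
proof -
  have "ueq sc br (\<lambda>w. \<Sum>u\<in>{u. p u \<noteq> 0}. p u * Bst T q u w) (\<lambda>w. \<Sum>u\<in>{u. p u \<noteq> 0}. p u * Bst T q' u w)"
  proof (rule ueq_sum)
    show "finite {u. p u \<noteq> 0}" using assms(1) by (simp add: fa_fin_def)
    fix u
    show "ueq sc br (\<lambda>w. p u * Bst T q u w) (\<lambda>w. p u * Bst T q' u w)"
    proof -
      have b: "ueq sc br (Bst T q u) (Bst T q' u)" by (rule Bst_cong[OF assms(2,3,4)])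
      show ?thesis using ueq_lin[OF b b, where c="p u" and d=0] by simp
    qed
  qed
  then show ?thesis using assms(1) by (simp add: star_supp)
qed

lemma star_x: "fa_star T (fa_word [x]) q = (\<lambda>w. T (fa_word [x]) q w + fa_mult (fa_word [x]) (T fa_one q) w)"
  unfolding star_word Bst_def by (simp add: Pow_lessThan_1 flip: fa_one_def)

lemma star_x_ueq: "fa_fin q \<Longrightarrow> ueq sc br (fa_star T (fa_word [x]) q) (fa_add (fa_mult (fa_word [x]) q) (T (fa_word [x]) q))"
proof -
  assume q: "fa_fin q"
  have "ueq sc br (\<lambda>w. 1 * T (fa_word [x]) q w + 1 * fa_mult (fa_word [x]) (T fa_one q) w)
     (\<lambda>w. 1 * T (fa_word [x]) q w + 1 * fa_mult (fa_word [x]) q w)"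
    by (intro ueq_lin ueq_refl ueq_mult_left T_one_left[OF E] T_fin[OF E]) (simp_all add: q)
  then show ?thesis unfolding star_x fa_add_def by (simp add: add.commute)
qed

lemma star_prod_fin: "fa_fin (star_prod T xs)"
  by (induction xs) (simp_all add: star_prod_def star_fin)

lemma star_prod_Cons: "star_prod T (x # xs) = fa_star T (fa_word [x]) (star_prod T xs)"
  by (simp add: star_prod_def)

context
  fixes \<Phi> :: "('v, 'k) fa \<Rightarrow> ('v, 'k) fa"
  assumes P: "phi_hom sc br tri T \<Phi>"
begin

lemma Phi_fin: "fa_fin p \<Longrightarrow> fa_fin (\<Phi> p)"
  by (rule P[unfolded phi_hom_def, THEN conjunct1, rule_format])

lemma Phi_one: "ueq sc br (\<Phi> fa_one) fa_one"
  using P[unfolded phi_hom_def] by (elim conjE)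

lemma Phi_mult: "fa_fin p \<Longrightarrow> fa_fin q \<Longrightarrow> ueq sc br (\<Phi> (fa_mult p q)) (fa_star T (\<Phi> p) (\<Phi> q))"
  by (rule P[unfolded phi_hom_def, THEN conjunct2, THEN conjunct2, THEN conjunct2, THEN conjunct2, THEN conjunct1, rule_format])

lemma Phi_x: "ueq sc br (\<Phi> (fa_word [x])) (fa_word [x])"
  by (rule P[unfolded phi_hom_def, THEN conjunct2, THEN conjunct2, THEN conjunct2, THEN conjunct2, THEN conjunct2, rule_format])

lemma Phi_cons: "ueq sc br (\<Phi> (fa_word (x # xs))) (fa_star T (fa_word [x]) (\<Phi> (fa_word xs)))"
proof -
  have e: "fa_word (x # xs) = fa_mult (fa_word [x]) (fa_word xs)" by (simp add: fa_word_mult)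
  have "ueq sc br (\<Phi> (fa_word (x # xs))) (fa_star T (\<Phi> (fa_word [x])) (\<Phi> (fa_word xs)))"
    unfolding e by (rule Phi_mult) simp_all
  also have "ueq sc br \<dots> (fa_star T (fa_word [x]) (\<Phi> (fa_word xs)))"
    by (intro star_cong_left[OF E] Phi_fin Phi_x) simp_all
  finally show ?thesis .
qed

lemma claim1: "ueq sc br (\<Phi> (fa_word (x # xs)))
           (fa_add (fa_mult (fa_word [x]) (\<Phi> (fa_word xs))) (T (fa_word [x]) (\<Phi> (fa_word xs))))"
  by (rule ueq_trans[OF Phi_cons star_x_ueq]) (simp add: Phi_fin)

lemma claim2_aux: "ueq sc br (\<Phi> (fa_word xs)) (star_prod T xs)"
proof (induction xs)
  case Nil
  then show ?case using Phi_one by (simp add: star_prod_def fa_one_def)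
next
  case (Cons x xs)
  have "ueq sc br (\<Phi> (fa_word (x # xs))) (fa_star T (fa_word [x]) (\<Phi> (fa_word xs)))"
    by (rule Phi_cons)
  also have "ueq sc br \<dots> (fa_star T (fa_word [x]) (star_prod T xs))"
    by (rule star_cong_right[OF _ _ _ Cons.IH]) (simp_all add: Phi_fin star_prod_fin)
  finally show ?case by (simp add: star_prod_Cons)
qed

end

end


lemma sl_shift: "finite C \<Longrightarrow> sorted_list_of_set (Suc ` C) = map Suc (sorted_list_of_set C)"
proof -
  assume C: "finite C"
  have "sorted_list_of_set (set (map Suc (sorted_list_of_set C))) = map Suc (sorted_list_of_set C)"
    by (rule sorted_list_of_set.idem_if_sorted_distinct)
      (use C in \<open>auto simp: sorted_map distinct_map\<close>)
  then show ?thesis using C by simp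
qed

lemma sl_ins0: "finite C \<Longrightarrow> sorted_list_of_set (insert 0 (Suc ` C)) = 0 # map Suc (sorted_list_of_set C)"
proof -
  assume C: "finite C"
  have "sorted_list_of_set (set (0 # map Suc (sorted_list_of_set C))) = 0 # map Suc (sorted_list_of_set C)"
    by (rule sorted_list_of_set.idem_if_sorted_distinct)
      (use C in \<open>auto simp: sorted_map distinct_map\<close>)
  then show ?thesis using C by simp
qed

lemma be_shift: "finite C \<Longrightarrow> block_elem tri (x # ys) (Suc ` C) = block_elem tri ys C"
  unfolding block_elem_def by (simp add: sl_shift comp_def)

lemma be_ins0: "finite C \<Longrightarrow> C \<noteq> {} \<Longrightarrow> block_elem tri (x # ys) (insert 0 (Suc ` C)) = tri x (block_elem tri ys C)"
proof -
  assume C: "finite C" "C \<noteq> {}"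
  then have ne: "sorted_list_of_set C \<noteq> []" by simp
  show ?thesis
    unfolding block_elem_def sl_ins0[OF C(1)]
    using ne by (cases "sorted_list_of_set C") (simp_all add: comp_def)
qed

lemma be_zero: "block_elem tri (x # ys) {0} = x"
  unfolding block_elem_def by simp


definition shiftS :: "nat set \<Rightarrow> nat set" where "shiftS C = Suc ` C"
definition unshift :: "nat set \<Rightarrow> nat set" where "unshift C = {k. Suc k \<in> C}"
definition newP :: "nat set set \<Rightarrow> nat set set" where "newP Q = insert {0} (shiftS ` Q)"
definition gB :: "nat set \<Rightarrow> nat set \<Rightarrow> nat set" where "gB B C = (if C = B then insert 0 (shiftS C) else shiftS C)"
definition modP :: "nat set set \<Rightarrow> nat set \<Rightarrow> nat set set" where "modP Q B = gB B ` Q"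

abbreviation Parts :: "nat \<Rightarrow> nat set set set" where "Parts m \<equiv> {P. partition_on {..<m} P}"

lemma unshift_shift[simp]: "unshift (shiftS C) = C"
  unfolding unshift_def shiftS_def by auto
lemma unshift_ins0[simp]: "unshift (insert 0 (shiftS C)) = C"
  unfolding unshift_def shiftS_def by auto
lemma unshift_gB[simp]: "unshift (gB B C) = C"
  unfolding gB_def by simp
lemma zero_notin_shift[simp]: "0 \<notin> shiftS C"
  unfolding shiftS_def by auto
lemma shift_unshift: "shiftS (unshift C) = C - {0}"
  unfolding unshift_def shiftS_def
proof (rule set_eqI)
  fix x show "x \<in> Suc ` {k. Suc k \<in> C} \<longleftrightarrow> x \<in> C - {0}" by (cases x) auto
qed
lemma shift_ne_single0[simp]: "shiftS C \<noteq> {0}"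
  using zero_notin_shift by blast
lemma shift_inj[simp]: "shiftS C = shiftS D \<longleftrightarrow> C = D"
proof
  assume "shiftS C = shiftS D"
  then have "unshift (shiftS C) = unshift (shiftS D)" by simp
  then show "C = D" by simp
qed simp
lemma ins0_inj[simp]: "insert 0 (shiftS C) = insert 0 (shiftS D) \<longleftrightarrow> C = D"
proof
  assume "insert 0 (shiftS C) = insert 0 (shiftS D)"
  then have "unshift (insert 0 (shiftS C)) = unshift (insert 0 (shiftS D))" by simp
  then show "C = D" by simp
qed simp
lemma ins0_ne_shift[simp]: "insert 0 (shiftS C) \<noteq> shiftS D"
  using zero_notin_shift by blast
lemma gB_inj: "gB B C = gB B D \<longleftrightarrow> C = D"
proof
  assume "gB B C = gB B D"
  then have "unshift (gB B C) = unshift (gB B D)" by simp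
  then show "C = D" by simp
qed simp

lemma part_finite_blocks: "partition_on {..<(m::nat)} P \<Longrightarrow> B \<in> P \<Longrightarrow> finite B"
proof -
  assume P: "partition_on {..<m} P" and B: "B \<in> P"
  have "B \<subseteq> \<Union>P" using B by (rule Union_upper)
  also have "\<dots> = {..<m}" using P by (simp add: partition_on_def)
  finally show "finite B" by (rule finite_subset[OF _ finite_lessThan])
qed

lemma part_nonempty: "partition_on A P \<Longrightarrow> B \<in> P \<Longrightarrow> B \<noteq> {}"
  unfolding partition_on_def by auto

lemma part_disj: "partition_on A P \<Longrightarrow> B \<in> P \<Longrightarrow> C \<in> P \<Longrightarrow> x \<in> B \<Longrightarrow> x \<in> C \<Longrightarrow> B = C"
  unfolding partition_on_def disjoint_def by auto

lemma newP_part: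
  assumes Q: "partition_on {..<n} Q"
  shows "partition_on {..<Suc n} (newP Q)"
proof (rule partition_onI)
  show "\<Union>(newP Q) = {..<Suc n}"
  proof -
    have "\<Union>Q = {..<n}" using Q by (simp add: partition_on_def)
    then have "\<Union>(shiftS ` Q) = Suc ` {..<n}" unfolding shiftS_def by auto
    then show ?thesis unfolding newP_def by (simp add: lessThan_Suc_eq_insert_0)
  qed
  show "{} \<notin> newP Q" unfolding newP_def shiftS_def using part_nonempty[OF Q] by auto
  fix p q assume pq: "p \<in> newP Q" "q \<in> newP Q" "p \<noteq> q"
  have sh: "disjnt (shiftS C) (shiftS D)" if "C \<in> Q" "D \<in> Q" "C \<noteq> D" for C D
  proof -
    have "disjnt C D" using part_disj[OF Q that(1,2)] that(3) unfolding disjnt_def by blast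
    then show ?thesis unfolding shiftS_def disjnt_def by auto
  qed
  have z: "disjnt {0} (shiftS C)" for C unfolding disjnt_def by simp
  from pq show "disjnt p q"
    unfolding newP_def using sh z by (auto simp: disjnt_sym)
qed

lemma modP_part:
  assumes Q: "partition_on {..<n} Q" and B: "B \<in> Q"
  shows "partition_on {..<Suc n} (modP Q B)"
proof (rule partition_onI)
  show "\<Union>(modP Q B) = {..<Suc n}"
  proof -
    have U: "\<Union>Q = {..<n}" using Q by (simp add: partition_on_def)
    have "\<Union>(modP Q B) = insert 0 (\<Union>(shiftS ` Q))"
      unfolding modP_def gB_def using B by (auto split: if_splits)
    also have "\<Union>(shiftS ` Q) = Suc ` {..<n}" using U unfolding shiftS_def by auto
    finally show ?thesis by (simp add: lessThan_Suc_eq_insert_0)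
  qed
  show "{} \<notin> modP Q B" unfolding modP_def gB_def shiftS_def using part_nonempty[OF Q] by auto
  fix p q assume pq: "p \<in> modP Q B" "q \<in> modP Q B" "p \<noteq> q"
  then obtain C D where C: "C \<in> Q" "p = gB B C" and D: "D \<in> Q" "q = gB B D"
    unfolding modP_def by blast
  with pq have CD: "C \<noteq> D" by auto
  have "disjnt C D" using part_disj[OF Q C(1) D(1)] CD unfolding disjnt_def by blast
  then have "disjnt (shiftS C) (shiftS D)" unfolding shiftS_def disjnt_def by auto
  moreover have "C \<noteq> B \<or> D \<noteq> B" using CD by blast
  ultimately show "disjnt p q"
    unfolding C(2) D(2) gB_def disjnt_def by auto
qed


lemma unshift_eq_blocks:
  assumes P: "partition_on A P" and C: "C \<in> P" and D: "D \<in> P" and e: "unshift C = unshift D"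
    and nz: "\<And>E. E \<in> P \<Longrightarrow> E \<noteq> {0}"
  shows "C = D"
proof -
  have "C - {0} = D - {0}" using arg_cong[OF e, of shiftS] by (simp add: shift_unshift)
  moreover have "C - {0} \<noteq> {}" using nz[OF C] part_nonempty[OF P C] by blast
  ultimately obtain y where "y \<in> C" "y \<in> D" by blast
  then show ?thesis using part_disj[OF P C D] by blast
qed

lemma unshift_ne: "C \<noteq> {} \<Longrightarrow> C \<noteq> {0} \<Longrightarrow> unshift C \<noteq> {}"
proof -
  assume a: "C \<noteq> {}" "C \<noteq> {0}"
  have "\<exists>y\<in>C. y \<noteq> 0"
  proof (rule ccontr)
    assume "\<not> (\<exists>y\<in>C. y \<noteq> 0)"
    then have "C \<subseteq> {0}" by auto
    with a show False by (simp add: subset_singleton_iff)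
  qed
  then obtain y where "y \<in> C" "y \<noteq> 0" by blast
  then obtain k where "y = Suc k" by (cases y) auto
  then show "unshift C \<noteq> {}" using \<open>y \<in> C\<close> unfolding unshift_def by auto
qed

lemma unshift_part:
  assumes P: "partition_on A P" and nz: "\<And>E. E \<in> P \<Longrightarrow> E \<noteq> {0}"
  shows "partition_on (unshift A) (unshift ` P)"
proof (rule partition_onI)
  have U: "\<Union>P = A" using P by (simp add: partition_on_def)
  show "\<Union>(unshift ` P) = unshift A"
  proof (rule set_eqI)
    fix x
    have "x \<in> \<Union>(unshift ` P) \<longleftrightarrow> Suc x \<in> \<Union>P" unfolding unshift_def by auto
    then show "x \<in> \<Union>(unshift ` P) \<longleftrightarrow> x \<in> unshift A" using U by (simp add: unshift_def)
  qed
  show "{} \<notin> unshift ` P"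
  proof
    assume "{} \<in> unshift ` P"
    then obtain E where E: "E \<in> P" "unshift E = {}" by (auto simp: image_iff)
    then show False using unshift_ne[OF part_nonempty[OF P E(1)] nz[OF E(1)]] by simp
  qed
  fix p q assume "p \<in> unshift ` P" "q \<in> unshift ` P" "p \<noteq> q"
  then obtain C D where C: "C \<in> P" "p = unshift C" and D: "D \<in> P" "q = unshift D" "C \<noteq> D"
    by blast
  have "disjnt C D" using part_disj[OF P C(1) D(1)] D(3) unfolding disjnt_def by blast
  then show "disjnt p q" unfolding C(2) D(2) unshift_def disjnt_def by auto
qed

lemma unshift_lessThan: "unshift {..<Suc n} = {..<n}" "unshift ({..<Suc n} - {0}) = {..<n}"
  unfolding unshift_def by auto

lemma decomp_new:
  assumes P: "partition_on {..<Suc n} P" and z: "{0} \<in> P"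
  shows "partition_on {..<n} (unshift ` (P - {{0}}))" "newP (unshift ` (P - {{0}})) = P"
proof -
  have P': "partition_on {..<Suc n} (insert {0} (P - {{0}}))" using P z by (simp add: insert_absorb)
  have z0: "0 \<notin> E" if "E \<in> P - {{0}}" for E using part_disj[OF P z, of E 0] that by auto
  have d: "disjnt {0} (\<Union>(P - {{0}}))" using z0 unfolding disjnt_def by auto
  have P2: "partition_on ({..<Suc n} - {0}) (P - {{0}})"
    using P' unfolding partition_on_insert[OF d] by blast
  show "partition_on {..<n} (unshift ` (P - {{0}}))"
    using unshift_part[OF P2] unshift_lessThan(2) by auto
  have "shiftS ` unshift ` (P - {{0}}) = P - {{0}}"
  proof -
    have "shiftS (unshift E) = E" if "E \<in> P - {{0}}" for E using z0[OF that] by (simp add: shift_unshift)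
    then show ?thesis by (simp add: image_image)
  qed
  then show "newP (unshift ` (P - {{0}})) = P" unfolding newP_def using z by auto
qed

lemma decomp_mod:
  assumes P: "partition_on {..<Suc n} P" and z: "{0} \<notin> P" and B0: "B0 \<in> P" "0 \<in> B0"
  shows "partition_on {..<n} (unshift ` P)" "unshift B0 \<in> unshift ` P" "modP (unshift ` P) (unshift B0) = P"
proof -
  have nz: "E \<noteq> {0}" if "E \<in> P" for E using that z by auto
  show "partition_on {..<n} (unshift ` P)"
    using unshift_part[OF P nz] unshift_lessThan(1) by simp
  show "unshift B0 \<in> unshift ` P" using B0 by simp
  have "gB (unshift B0) (unshift C) = C" if C: "C \<in> P" for C
  proof (cases "C = B0")
    case True
    then show ?thesis using B0 by (auto simp: gB_def shift_unshift)
  next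
    case False
    then have "unshift C \<noteq> unshift B0" using unshift_eq_blocks[OF P C B0(1) _ nz] by blast
    moreover have "0 \<notin> C" using part_disj[OF P C B0(1)] False B0(2) by blast
    ultimately show ?thesis by (simp add: gB_def shift_unshift)
  qed
  then show "modP (unshift ` P) (unshift B0) = P" unfolding modP_def by (simp add: image_image)
qed

lemma newP_has0: "{0} \<in> newP Q" unfolding newP_def by simp

lemma modP_no0:
  assumes Q: "partition_on A Q" and B: "B \<in> Q" shows "{0} \<notin> modP Q B"
proof
  assume "{0} \<in> modP Q B"
  then obtain C where C: "C \<in> Q" "gB B C = {0}" unfolding modP_def by auto
  show False
  proof (cases "C = B")
    case True
    then have "shiftS C = {}" using C(2) unfolding gB_def by (auto simp: shiftS_def)
    then show False using part_nonempty[OF Q C(1)] by (simp add: shiftS_def)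
  next
    case False
    then show False using C(2) unfolding gB_def by simp
  qed
qed


lemma parts_finite: "finite (Parts n)"
  by (rule finitely_many_partition_on) simp

lemma part_finite: "partition_on {..<(n::nat)} Q \<Longrightarrow> finite Q"
  by (rule finite_elements) auto

lemma block0_ex:
  assumes P: "partition_on {..<Suc n} P"
  shows "\<exists>B0. B0 \<in> P \<and> 0 \<in> B0"
proof -
  have "0 \<in> \<Union>P" using P by (simp add: partition_on_def)
  then show ?thesis by blast
qed

lemma block0_the:
  assumes P: "partition_on A P" and B0: "B0 \<in> P" "0 \<in> B0"
  shows "(THE B. B \<in> P \<and> 0 \<in> B) = B0"
  by (rule the_equality) (use B0 part_disj[OF P] in blast)+

lemma sum_parts:
  fixes F :: "nat set set \<Rightarrow> 'a::comm_monoid_add"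
  shows "(\<Sum>P\<in>Parts (Suc n). F P) = (\<Sum>Q\<in>Parts n. F (newP Q)) + (\<Sum>Q\<in>Parts n. \<Sum>B\<in>Q. F (modP Q B))"
proof -
  define J where "J = Inl ` Parts n \<union> Inr ` (SIGMA Q:Parts n. Q)"
  define \<phi> where "\<phi> z = (case z of Inl Q \<Rightarrow> newP Q | Inr (Q, B) \<Rightarrow> modP Q B)" for z :: "nat set set + nat set set \<times> nat set"
  define \<psi> where "\<psi> P = (if {0} \<in> P then Inl (unshift ` (P - {{0}}))
       else Inr (unshift ` P, unshift (THE B. B \<in> P \<and> 0 \<in> B)))" for P
  have inv1: "\<phi> (\<psi> P) = P \<and> \<psi> P \<in> J" if "P \<in> Parts (Suc n)" for P
  proof -
    from that have P: "partition_on {..<Suc n} P" by simp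
    show ?thesis
    proof (cases "{0} \<in> P")
      case True
      then show ?thesis using decomp_new[OF P True] by (simp add: \<phi>_def \<psi>_def J_def)
    next
      case False
      obtain B0 where B0: "B0 \<in> P" "0 \<in> B0" using block0_ex[OF P] by blast
      show ?thesis using decomp_mod[OF P False B0] False block0_the[OF P B0]
        by (simp add: \<phi>_def \<psi>_def J_def)
    qed
  qed
  have "(\<Sum>P\<in>Parts (Suc n). F P) = (\<Sum>z\<in>J. F (\<phi> z))"
  proof (rule sum.reindex_bij_witness[where i = \<phi> and j = \<psi>])
    fix P assume "P \<in> Parts (Suc n)"
    then show "\<phi> (\<psi> P) = P" "\<psi> P \<in> J" "F (\<phi> (\<psi> P)) = F P" using inv1 by auto
  next
    fix z assume z: "z \<in> J"
    show "\<psi> (\<phi> z) = z"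
    proof (cases z)
      case (Inl Q)
      have e: "newP Q - {{0}} = shiftS ` Q" unfolding newP_def using shift_ne_single0 by blast
      have u: "unshift ` shiftS ` Q = Q" by (simp add: image_image)
      have "\<psi> (newP Q) = Inl Q" unfolding \<psi>_def using newP_has0[of Q] e u by simp
      then show ?thesis unfolding Inl \<phi>_def by simp
    next
      case (Inr QB)
      then obtain Q B where QB: "z = Inr (Q, B)" by (cases QB) auto
      with z have Q: "partition_on {..<n} Q" and B: "B \<in> Q" unfolding J_def by auto
      have th: "(THE B'. B' \<in> modP Q B \<and> 0 \<in> B') = insert 0 (shiftS B)"
      proof (rule the_equality)
        show "insert 0 (shiftS B) \<in> modP Q B \<and> 0 \<in> insert 0 (shiftS B)"
          unfolding modP_def using B by (auto simp: gB_def intro!: image_eqI[of _ _ B])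
        fix B' assume "B' \<in> modP Q B \<and> 0 \<in> B'"
        then obtain C where "C \<in> Q" "B' = gB B C" "0 \<in> gB B C" unfolding modP_def by auto
        then show "B' = insert 0 (shiftS B)" unfolding gB_def by (auto split: if_splits)
      qed
      have "unshift ` modP Q B = Q" unfolding modP_def by (simp add: image_image)
      then show ?thesis using QB modP_no0[OF Q B] th by (simp add: \<phi>_def \<psi>_def)
    qed
    show "\<phi> z \<in> Parts (Suc n)"
      using z newP_part modP_part unfolding J_def \<phi>_def by auto
  qed
  also have "\<dots> = (\<Sum>z\<in>Inl ` Parts n. F (\<phi> z)) + (\<Sum>z\<in>Inr ` (SIGMA Q:Parts n. Q). F (\<phi> z))"
    unfolding J_def
    by (rule sum.union_disjoint) (auto intro: parts_finite part_finite)
  also have "(\<Sum>z\<in>Inl ` Parts n. F (\<phi> z)) = (\<Sum>Q\<in>Parts n. F (newP Q))"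
    by (subst sum.reindex) (auto simp: \<phi>_def)
  also have "(\<Sum>z\<in>Inr ` (SIGMA Q:Parts n. Q). F (\<phi> z)) = (\<Sum>(Q, B)\<in>(SIGMA Q:Parts n. Q). F (modP Q B))"
    by (subst sum.reindex) (auto simp: \<phi>_def intro!: sum.cong)
  also have "\<dots> = (\<Sum>Q\<in>Parts n. \<Sum>B\<in>Q. F (modP Q B))"
    by (rule sum.Sigma[symmetric]) (auto intro: parts_finite part_finite)
  finally show ?thesis .
qed


context linorder begin
lemma skl_idem:
  assumes "inj_on f S" "set xs \<subseteq> S" "sorted (map f xs)" "distinct xs"
  shows "sorted_key_list_of_set f (set xs) = xs"
proof -
  interpret folding_insort_key "(\<le>)" "(<)" S f by unfold_locales (rule assms(1))
  show ?thesis by (rule idem_if_sorted_distinct) (use assms in auto)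
qed
lemma skl_props:
  assumes "inj_on f S" "A \<subseteq> S" "finite A"
  shows "set (sorted_key_list_of_set f A) = A" "sorted (map f (sorted_key_list_of_set f A))"
    "distinct (sorted_key_list_of_set f A)"
proof -
  interpret folding_insort_key "(\<le>)" "(<)" S f by unfold_locales (rule assms(1))
  show "set (sorted_key_list_of_set f A) = A" using assms by simp
  show "sorted (map f (sorted_key_list_of_set f A))" using assms by simp
  show "distinct (sorted_key_list_of_set f A)" using distinct_sorted_key_list_of_set[OF assms(2)] distinct_map by blast
qed
end

abbreviation LQ :: "nat set set \<Rightarrow> nat set list" where "LQ Q \<equiv> sorted_key_list_of_set Max Q"

lemma Max_inj_part:
  assumes Q: "partition_on {..<(n::nat)} Q" shows "inj_on Max Q"
proof (rule inj_onI)
  fix C D assume C: "C \<in> Q" and D: "D \<in> Q" and e: "Max C = Max D"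
  have "Max C \<in> C" using part_finite_blocks[OF Q C] part_nonempty[OF Q C] by simp
  moreover have "Max D \<in> D" using part_finite_blocks[OF Q D] part_nonempty[OF Q D] by simp
  ultimately show "C = D" using part_disj[OF Q C D] e by simp
qed

lemma LQ_props:
  assumes Q: "partition_on {..<(n::nat)} Q"
  shows "set (LQ Q) = Q" "sorted (map Max (LQ Q))" "distinct (LQ Q)"
  using skl_props[OF Max_inj_part[OF Q] subset_refl part_finite[OF Q]] by auto

lemma Max_shift: "finite C \<Longrightarrow> C \<noteq> {} \<Longrightarrow> Max (shiftS C) = Suc (Max C)"
  unfolding shiftS_def by (simp add: mono_Max_commute[symmetric] mono_Suc)

lemma Max_ins0: "finite C \<Longrightarrow> C \<noteq> {} \<Longrightarrow> Max (insert 0 (shiftS C)) = Suc (Max C)"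
  using Max_shift[of C] by (simp add: shiftS_def)

lemma Max_gB: "finite C \<Longrightarrow> C \<noteq> {} \<Longrightarrow> Max (gB B C) = Suc (Max C)"
  unfolding gB_def by (cases "C = B") (simp_all add: Max_shift Max_ins0)

lemma LQ_mod:
  assumes Q: "partition_on {..<n} Q" and B: "B \<in> Q"
  shows "LQ (modP Q B) = map (gB B) (LQ Q)"
proof -
  have MQ: "\<And>C. C \<in> Q \<Longrightarrow> Max (gB B C) = Suc (Max C)"
    using Max_gB part_finite_blocks[OF Q] part_nonempty[OF Q] by blast
  have inj: "inj_on Max (modP Q B)"
  proof (rule inj_onI)
    fix X Y assume X: "X \<in> modP Q B" and Y: "Y \<in> modP Q B" and e: "Max X = Max Y"
    obtain C where C: "C \<in> Q" "X = gB B C" using X unfolding modP_def by auto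
    obtain D where D: "D \<in> Q" "Y = gB B D" using Y unfolding modP_def by auto
    have "Max C = Max D" using e MQ[OF C(1)] MQ[OF D(1)] C(2) D(2) by simp
    then have "C = D" using inj_onD[OF Max_inj_part[OF Q] _ C(1) D(1)] by simp
    then show "X = Y" using C D by simp
  qed
  have s: "set (map (gB B) (LQ Q)) = modP Q B" using LQ_props(1)[OF Q] unfolding modP_def by simp
  have "map Max (map (gB B) (LQ Q)) = map Suc (map Max (LQ Q))"
    using MQ LQ_props(1)[OF Q] by (auto simp: map_eq_conv)
  then have so: "sorted (map Max (map (gB B) (LQ Q)))"
    using LQ_props(2)[OF Q] by (simp add: sorted_map del: map_map)
  have di: "distinct (map (gB B) (LQ Q))"
    using LQ_props(3)[OF Q] by (simp add: distinct_map inj_on_def gB_inj)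
  have "sorted_key_list_of_set Max (set (map (gB B) (LQ Q))) = map (gB B) (LQ Q)"
    by (rule skl_idem[OF inj]) (use s so di in auto)
  then show ?thesis using s by simp
qed

lemma LQ_new:
  assumes Q: "partition_on {..<n} Q"
  shows "LQ (newP Q) = {0} # map shiftS (LQ Q)"
proof -
  have MQ: "\<And>C. C \<in> Q \<Longrightarrow> Max (shiftS C) = Suc (Max C)"
    using Max_shift part_finite_blocks[OF Q] part_nonempty[OF Q] by blast
  have inj: "inj_on Max (newP Q)"
  proof (rule inj_onI)
    fix X Y assume X: "X \<in> newP Q" and Y: "Y \<in> newP Q" and e: "Max X = Max Y"
    have nz: "Max (shiftS C) \<noteq> 0" if "C \<in> Q" for C using MQ[OF that] by simp
    show "X = Y"
    proof (cases "X = {0}")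
      case True
      show ?thesis
      proof (rule ccontr)
        assume "X \<noteq> Y"
        then obtain D where "D \<in> Q" "Y = shiftS D" using Y True unfolding newP_def by auto
        then show False using e True nz by simp
      qed
    next
      case False
      then obtain C where C: "C \<in> Q" "X = shiftS C" using X unfolding newP_def by auto
      show ?thesis
      proof (cases "Y = {0}")
        case True then show ?thesis using C e nz[OF C(1)] by simp
      next
        case False
        then obtain D where D: "D \<in> Q" "Y = shiftS D" using Y unfolding newP_def by auto
        have "Max C = Max D" using e MQ[OF C(1)] MQ[OF D(1)] C(2) D(2) by simp
        then have "C = D" using inj_onD[OF Max_inj_part[OF Q] _ C(1) D(1)] by simp
        then show "X = Y" using C D by simp
      qed
    qed
  qed
  have s: "set ({0} # map shiftS (LQ Q)) = newP Q" using LQ_props(1)[OF Q] unfolding newP_def by simp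
  have "map Max (map shiftS (LQ Q)) = map Suc (map Max (LQ Q))"
    using MQ LQ_props(1)[OF Q] by (auto simp: map_eq_conv)
  then have so: "sorted (map Max ({0} # map shiftS (LQ Q)))"
    using LQ_props(2)[OF Q] by (simp add: sorted_map del: map_map)
  have di: "distinct ({0} # map shiftS (LQ Q))"
  proof -
    have "{0} \<notin> set (map shiftS (LQ Q))"
    proof
      assume "{0} \<in> set (map shiftS (LQ Q))"
      then obtain C where "{0} = shiftS C" unfolding set_map by (rule imageE)
      then show False using shift_ne_single0[of C] by simp
    qed
    moreover have "distinct (map shiftS (LQ Q))"
      using LQ_props(3)[OF Q] by (simp add: distinct_map inj_on_def)
    ultimately show ?thesis by simp
  qed
  have "sorted_key_list_of_set Max (set ({0} # map shiftS (LQ Q))) = {0} # map shiftS (LQ Q)"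
    by (rule skl_idem[OF inj]) (use s so di in auto)
  then show ?thesis using s by simp
qed


definition Xl :: "('v::zero \<Rightarrow> 'v \<Rightarrow> 'v) \<Rightarrow> 'v list \<Rightarrow> nat set set \<Rightarrow> 'v list" where
  "Xl tri ys Q = map (block_elem tri ys) (LQ Q)"

definition Dx :: "('v \<Rightarrow> 'v \<Rightarrow> 'v) \<Rightarrow> 'v \<Rightarrow> 'v list \<Rightarrow> ('v, 'k::comm_ring_1) fa" where
  "Dx tri x ws = (\<lambda>w. \<Sum>i<length ws. fa_word (ws[i := tri x (ws ! i)]) w)"

lemma Xl_new:
  assumes Q: "partition_on {..<n} Q"
  shows "Xl tri (x # ys) (newP Q) = x # Xl tri ys Q"
proof -
  have "block_elem tri (x # ys) (shiftS C) = block_elem tri ys C" if "C \<in> set (LQ Q)" for C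
    using that LQ_props(1)[OF Q] part_finite_blocks[OF Q] be_shift unfolding shiftS_def by blast
  then show ?thesis unfolding Xl_def LQ_new[OF Q] by (simp add: be_zero)
qed

lemma Xl_mod:
  assumes Q: "partition_on {..<n} Q" and B: "B \<in> Q"
  shows "Xl tri (x # ys) (modP Q B) =
    map (\<lambda>C. if C = B then tri x (block_elem tri ys C) else block_elem tri ys C) (LQ Q)"
proof -
  have "block_elem tri (x # ys) (gB B C) = (if C = B then tri x (block_elem tri ys C) else block_elem tri ys C)"
    if "C \<in> set (LQ Q)" for C
  proof -
    have C: "C \<in> Q" using that LQ_props(1)[OF Q] by simp
    show ?thesis using be_shift[OF part_finite_blocks[OF Q C]] be_ins0[OF part_finite_blocks[OF Q C] part_nonempty[OF Q C]]
      unfolding gB_def shiftS_def by (cases "C = B") simp_all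
  qed
  then show ?thesis unfolding Xl_def LQ_mod[OF Q B] by simp
qed

lemma map_if_nth:
  assumes "distinct L" "i < length L"
  shows "map (\<lambda>C. if C = L ! i then g C else h C) L = (map h L)[i := g (L ! i)]"
proof (rule nth_equalityI, simp)
  fix j assume "j < length (map (\<lambda>C. if C = L ! i then g C else h C) L)"
  then have j: "j < length L" by simp
  have "L ! j = L ! i \<longleftrightarrow> j = i" using assms j nth_eq_iff_index_eq by blast
  then show "map (\<lambda>C. if C = L ! i then g C else h C) L ! j = (map h L)[i := g (L ! i)] ! j"
    using j assms(2) by (auto simp: nth_list_update)
qed

lemma sum_mod:
  assumes Q: "partition_on {..<n} Q"
  shows "(\<Sum>B\<in>Q. fa_word (Xl tri (x # ys) (modP Q B)) w) = (Dx tri x (Xl tri ys Q) w :: 'k::comm_ring_1)"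
proof -
  let ?L = "LQ Q"
  have bij: "bij_betw ((!) ?L) {..<length ?L} Q"
    by (rule bij_betw_nth) (simp_all add: LQ_props[OF Q])
  have "(\<Sum>B\<in>Q. fa_word (Xl tri (x # ys) (modP Q B)) w :: 'k) = (\<Sum>i<length ?L. fa_word (Xl tri (x # ys) (modP Q (?L ! i))) w)"
    by (rule sum.reindex_bij_betw[OF bij, symmetric])
  also have "\<dots> = (\<Sum>i<length ?L. fa_word ((Xl tri ys Q)[i := tri x (Xl tri ys Q ! i)]) w)"
  proof (rule sum.cong[OF refl])
    fix i assume i: "i \<in> {..<length ?L}"
    have Bi: "?L ! i \<in> Q" using i LQ_props(1)[OF Q] nth_mem by fastforce
    show "fa_word (Xl tri (x # ys) (modP Q (?L ! i))) w = (fa_word ((Xl tri ys Q)[i := tri x (Xl tri ys Q ! i)]) w :: 'k)"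
      unfolding Xl_mod[OF Q Bi] map_if_nth[OF LQ_props(3)[OF Q] i[simplified]]
      using i by (simp add: Xl_def)
  qed
  also have "\<dots> = Dx tri x (Xl tri ys Q) w" unfolding Dx_def by (simp add: Xl_def)
  finally show ?thesis .
qed

lemma psum_cons:
  "partition_sum tri (x # ys) = (\<lambda>w. (\<Sum>Q\<in>Parts (length ys). fa_word (x # Xl tri ys Q) w)
      + (\<Sum>Q\<in>Parts (length ys). (Dx tri x (Xl tri ys Q) w :: 'k::comm_ring_1)))"
proof (rule ext)
  fix w
  have "partition_sum tri (x # ys) w = (\<Sum>P\<in>Parts (Suc (length ys)). fa_word (Xl tri (x # ys) P) w :: 'k)"
    unfolding partition_sum_def X_part_def Xl_def by simp
  also have "\<dots> = (\<Sum>Q\<in>Parts (length ys). fa_word (Xl tri (x # ys) (newP Q)) w)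
      + (\<Sum>Q\<in>Parts (length ys). \<Sum>B\<in>Q. fa_word (Xl tri (x # ys) (modP Q B)) w)"
    by (rule sum_parts)
  also have "\<dots> = (\<Sum>Q\<in>Parts (length ys). fa_word (x # Xl tri ys Q) w)
      + (\<Sum>Q\<in>Parts (length ys). Dx tri x (Xl tri ys Q) w)"
    by (intro arg_cong2[where f = "(+)"] sum.cong refl) (simp_all add: Xl_new sum_mod)
  finally show "partition_sum tri (x # ys) w = (\<Sum>Q\<in>Parts (length ys). fa_word (x # Xl tri ys Q) w)
      + (\<Sum>Q\<in>Parts (length ys). (Dx tri x (Xl tri ys Q) w :: 'k))" .
qed


lemma fa_mult_sum_right1:
  fixes f :: "'a \<Rightarrow> ('v, 'k::comm_ring_1) fa"
  shows "fa_mult q (\<lambda>w. \<Sum>i\<in>A. f i w) = (\<lambda>w. \<Sum>i\<in>A. fa_mult q (f i) w)"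
  using fa_mult_sum_right[where q=q and c="\<lambda>_. 1" and f=f and A=A] by simp

lemma Dx_fin: "fa_fin (Dx tri x ws :: ('v, 'k::comm_ring_1) fa)"
  unfolding Dx_def by (rule fa_fin_sum) simp_all

lemma Dx_Nil: "Dx tri x [] = (\<lambda>w. 0)"
  unfolding Dx_def by simp

lemma Dx_Cons: "(Dx tri x (y # ws) :: ('v, 'k::comm_ring_1) fa) = (\<lambda>w. fa_mult (fa_word [y]) (Dx tri x ws) w + fa_mult (fa_word [tri x y]) (fa_word ws) w)"
  unfolding Dx_def fa_mult_sum_right1 fa_word_mult length_Cons sum.lessThan_Suc_shift
  by (simp add: add.commute)

context
  fixes sc :: "'k::comm_ring_1 \<Rightarrow> 'v::ab_group_add \<Rightarrow> 'v" and br tri :: "'v \<Rightarrow> 'v \<Rightarrow> 'v"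
    and T :: "('v, 'k) fa \<Rightarrow> ('v, 'k) fa \<Rightarrow> ('v, 'k) fa"
  assumes E: "ext_post_lie sc br tri T"
begin

lemma T_sum_right1:
  assumes "finite A" "\<And>i. i \<in> A \<Longrightarrow> fa_fin (f i)" "fa_fin p"
  shows "ueq sc br (T p (\<lambda>w. \<Sum>i\<in>A. f i w)) (\<lambda>w. \<Sum>i\<in>A. T p (f i) w)"
  using T_sum_right[OF E assms, where c="\<lambda>_. 1"] by simp

lemma T_word: "ueq sc br (T (fa_word [x]) (fa_word ws)) (Dx tri x ws)"
proof (induction ws)
  case Nil
  have f1: "ueq sc br (T (fa_word [x]) fa_one) (fa_scale (fa_eps (fa_word [x])) fa_one)"
    by (rule T_one_right[OF E]) simp
  have f2: "fa_scale (fa_eps (fa_word [x])) fa_one = (\<lambda>w. 0 :: 'k)"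
    unfolding fa_scale_def fa_eps_def fa_word_def by simp
  have "ueq sc br (T (fa_word [x]) fa_one) (\<lambda>w. 0)" using ueq_trans[OF f1 ueq_eqI[OF f2]] .
  then show ?case by (simp add: Dx_Nil fa_one_def)
next
  case (Cons y ws)
  have e: "fa_word (y # ws) = fa_mult (fa_word [y]) (fa_word ws)" by (simp add: fa_word_mult)
  have "ueq sc br (T (fa_word [x]) (fa_mult (fa_word [y]) (fa_word ws)))
     (\<lambda>w. \<Sum>S\<in>Pow {..<length [x]}. fa_mult (T (fa_word (nths [x] S)) (fa_word [y])) (T (fa_word (nths [x] (- S))) (fa_word ws)) w)"
    by (rule T_prod[OF E]) simp_all
  also have "(\<lambda>w. \<Sum>S\<in>Pow {..<length [x]}. fa_mult (T (fa_word (nths [x] S)) (fa_word [y])) (T (fa_word (nths [x] (- S))) (fa_word ws)) w)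
     = (\<lambda>w. 1 * fa_mult (T fa_one (fa_word [y])) (T (fa_word [x]) (fa_word ws)) w + 1 * fa_mult (T (fa_word [x]) (fa_word [y])) (T fa_one (fa_word ws)) w)"
    by (simp add: Pow_lessThan_1 flip: fa_one_def)
  also have "ueq sc br \<dots> (\<lambda>w. 1 * fa_mult (fa_word [y]) (Dx tri x ws) w + 1 * fa_mult (fa_word [tri x y]) (fa_word ws) w)"
  proof (rule ueq_lin)
    show "ueq sc br (fa_mult (T fa_one (fa_word [y])) (T (fa_word [x]) (fa_word ws))) (fa_mult (fa_word [y]) (Dx tri x ws))"
      by (rule ueq_mult[OF _ _ _ _ T_one_left[OF E] Cons.IH]) (simp_all add: T_fin[OF E] Dx_fin)
    show "ueq sc br (fa_mult (T (fa_word [x]) (fa_word [y])) (T fa_one (fa_word ws))) (fa_mult (fa_word [tri x y]) (fa_word ws))"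
      by (rule ueq_mult[OF _ _ _ _ T_xy[OF E] T_one_left[OF E]]) (simp_all add: T_fin[OF E])
  qed
  also have "\<dots> = Dx tri x (y # ws)" by (simp add: Dx_Cons)
  finally show ?case unfolding e .
qed

lemma psum_fin: "fa_fin (partition_sum tri ys :: ('v, 'k) fa)"
  unfolding partition_sum_def X_part_def
  by (rule fa_fin_sum) (simp_all add: finitely_many_partition_on)

lemma psum_alt: "partition_sum tri ys = (\<lambda>w. \<Sum>Q\<in>Parts (length ys). (fa_word (Xl tri ys Q) w :: 'k))"
  unfolding partition_sum_def X_part_def Xl_def ..

lemma parts_empty: "{P. partition_on {} P} = {{}}"
  by (auto simp: partition_on_empty)

lemma LQ_empty: "LQ {} = []"
  using skl_props(1)[of Max "{}" "{}"] by simp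

lemma claim3_aux: "ueq sc br (star_prod T ys) (partition_sum tri ys)"
proof (induction ys)
  case Nil
  have "partition_sum tri [] = (fa_one :: ('v, 'k) fa)"
    unfolding partition_sum_def X_part_def by (simp add: parts_empty LQ_empty fa_one_def)
  then show ?case by (simp add: star_prod_def)
next
  case (Cons x ys)
  let ?ps = "partition_sum tri ys :: ('v, 'k) fa"
  let ?sp = "star_prod T ys"
  have fps: "fa_fin ?ps" by (rule psum_fin)
  have fsp: "fa_fin ?sp" by (rule star_prod_fin[OF E])
  have s1: "star_prod T (x # ys) = fa_star T (fa_word [x]) ?sp" by (rule star_prod_Cons[OF E])
  have u1: "ueq sc br (fa_star T (fa_word [x]) ?sp) (fa_add (fa_mult (fa_word [x]) ?sp) (T (fa_word [x]) ?sp))"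
    by (rule star_x_ueq[OF E fsp])
  have u2a: "ueq sc br (fa_mult (fa_word [x]) ?sp) (fa_mult (fa_word [x]) ?ps)"
    by (rule ueq_mult_left[OF fa_fin_word fsp fps Cons.IH])
  have u2b: "ueq sc br (T (fa_word [x]) ?sp) (T (fa_word [x]) ?ps)"
    by (rule T_cong_right[OF E fa_fin_word fsp fps Cons.IH])
  have e3: "fa_mult (fa_word [x]) ?ps = (\<lambda>w. \<Sum>Q\<in>Parts (length ys). fa_word (x # Xl tri ys Q) w)"
    unfolding psum_alt fa_mult_sum_right1 by (simp add: fa_word_mult)
  have u4: "ueq sc br (T (fa_word [x]) ?ps) (\<lambda>w. \<Sum>Q\<in>Parts (length ys). T (fa_word [x]) (fa_word (Xl tri ys Q)) w)"
    unfolding psum_alt by (rule T_sum_right1) (simp_all add: parts_finite)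
  have u5: "ueq sc br (\<lambda>w. \<Sum>Q\<in>Parts (length ys). T (fa_word [x]) (fa_word (Xl tri ys Q)) w)
      (\<lambda>w. \<Sum>Q\<in>Parts (length ys). Dx tri x (Xl tri ys Q) w)"
    by (rule ueq_sum) (simp_all add: parts_finite T_word)
  have e6: "fa_add (\<lambda>w. \<Sum>Q\<in>Parts (length ys). fa_word (x # Xl tri ys Q) w)
      (\<lambda>w. \<Sum>Q\<in>Parts (length ys). Dx tri x (Xl tri ys Q) w) = partition_sum tri (x # ys)"
    unfolding psum_cons fa_add_def ..
  have "ueq sc br (fa_star T (fa_word [x]) ?sp) (fa_add (fa_mult (fa_word [x]) ?ps) (T (fa_word [x]) ?ps))"
    by (rule ueq_trans[OF u1 ueq_add[OF u2a u2b]])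
  also have "ueq sc br (fa_add (fa_mult (fa_word [x]) ?ps) (T (fa_word [x]) ?ps))
     (fa_add (\<lambda>w. \<Sum>Q\<in>Parts (length ys). fa_word (x # Xl tri ys Q) w)
      (\<lambda>w. \<Sum>Q\<in>Parts (length ys). Dx tri x (Xl tri ys Q) w))"
    by (rule ueq_add[OF ueq_eqI[OF e3] ueq_trans[OF u4 u5]])
  finally show ?case unfolding s1 e6 .
qed

end


theorem mainTheorem2:
  fixes sc :: "'k::real_normed_field \<Rightarrow> 'v::ab_group_add \<Rightarrow> 'v"
    and br tri :: "'v \<Rightarrow> 'v \<Rightarrow> 'v"
    and T :: "('v, 'k) fa \<Rightarrow> ('v, 'k) fa \<Rightarrow> ('v, 'k) fa"
    and \<Phi> :: "('v, 'k) fa \<Rightarrow> ('v, 'k) fa"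
    and x :: 'v and xs :: "'v list"
  assumes "post_lie_algebra sc br tri"
    and "ext_post_lie sc br tri T"
    and "phi_hom sc br tri T \<Phi>"
  shows "ueq sc br (\<Phi> (fa_word (x # xs)))
           (fa_add (fa_mult (fa_word [x]) (\<Phi> (fa_word xs))) (T (fa_word [x]) (\<Phi> (fa_word xs))))
       \<and> ueq sc br (\<Phi> (fa_word (x # xs))) (star_prod T (x # xs))
       \<and> ueq sc br (star_prod T (x # xs)) (partition_sum tri (x # xs))"
proof (intro conjI)
  show "ueq sc br (\<Phi> (fa_word (x # xs)))
           (fa_add (fa_mult (fa_word [x]) (\<Phi> (fa_word xs))) (T (fa_word [x]) (\<Phi> (fa_word xs))))"
    by (rule claim1[OF assms(2) assms(3)])
  show "ueq sc br (\<Phi> (fa_word (x # xs))) (star_prod T (x # xs))"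
    by (rule claim2_aux[OF assms(2) assms(3)])
  show "ueq sc br (star_prod T (x # xs)) (partition_sum tri (x # xs))"
    by (rule claim3_aux[OF assms(2)])
qed

end
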